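(* The sequence $1\to\mathrm{Iso}(\mathbb U^\prec)\xrightarrow{i^\prec}\mathrm{Aut}(\mathbb U^\prec)\xrightarrow{\pi^\prec}\mathrm{Aut}(\mathbb Q_{\ge0})\to1$ is a short exact sequence of topological groups, where $i^\prec$ is the inclusion and $\pi^\prec(f)=D_f$. Moreover, $\pi^\prec$ admits a continuous homomorphic section and induces an isomorphism of topological groups $\mathrm{Aut}(\mathbb U^\prec)\cong\mathrm{Iso}(\mathbb U^\prec)\rtimes\mathrm{Aut}(\mathbb Q_{\ge0})$.
   Context: A two-sorted ultrametric space is $(X,d,D)$ with $D$ a linear order with least element $0$ and $d$ an ultrametric with values in $D$. A convex order is a linear order of the points in which every ball is convex. $\mathbb U^\prec$ is the Fraïssé limit of the class of finite convexly ordered two-sorted ultrametric spaces with order-preserving dc-embeddings (dc-embedding: injection $f$ with order embedding $D_f$ of distance sets fixing $0$ and $d(f(x),f(x'))=D_f(d(x,x'))$); its distance set is $\mathbb Q_{\ge0}$. $\mathrm{Aut}(\mathbb U^\prec)$ is its group of order-preserving dc-automorphisms with the topology of pointwise convergence on both sorts, $\mathrm{Iso}(\mathbb U^\prec)$ the closed subgroup of those with $D_f=\mathrm{id}$. A short exact sequence of topological groups $1\to G_1\xrightarrow{i}H\xrightarrow{\pi}G_2\to1$ means $i$ is a continuous embedding, $\pi$ a continuous open surjective homomorphism, and $i[G_1]=\ker\pi$. The semidirect product $N\rtimes H$ is $N\times H$ with product topology and multiplication $(n,h)(n',h')=(n\,s(h)n's(h)^{-1},hh')$, the isomorphism being $(n,h)\mapsto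 n\,s(h)$ for the section $s$. *)

theory Defs
  imports "HOL-Analysis.Analysis" "HOL-Algebra.Coset"
begin

text \<open>Distance sets are represented as subsets of the nonnegative rationals with the
inherited order (every finite linear order with least element 0 is isomorphic to such a set);
the distance set of the limit is all of Qnn.\<close>

definition Qnn :: "rat set" where "Qnn = {q. 0 \<le> q}"

definition ultrametric_on :: "'p set \<Rightarrow> rat set \<Rightarrow> ('p \<Rightarrow> 'p \<Rightarrow> rat) \<Rightarrow> bool" where
  "ultrametric_on Y E d \<longleftrightarrow>
     (\<forall>x\<in>Y. \<forall>y\<in>Y. d x y \<in> E) \<and>
     (\<forall>x\<in>Y. \<forall>y\<in>Y. d x y = 0 \<longleftrightarrow> x = y) \<and>
     (\<forall>x\<in>Y. \<forall>y\<in>Y. d x y = d y x) \<and>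
     (\<forall>x\<in>Y. \<forall>y\<in>Y. \<forall>z\<in>Y. d x z \<le> max (d x y) (d y z))"

definition strict_linear_on :: "'p set \<Rightarrow> ('p \<Rightarrow> 'p \<Rightarrow> bool) \<Rightarrow> bool" where
  "strict_linear_on Y lt \<longleftrightarrow>
     (\<forall>x\<in>Y. \<not> lt x x) \<and>
     (\<forall>x\<in>Y. \<forall>y\<in>Y. \<forall>z\<in>Y. lt x y \<and> lt y z \<longrightarrow> lt x z) \<and>
     (\<forall>x\<in>Y. \<forall>y\<in>Y. x \<noteq> y \<longrightarrow> lt x y \<or> lt y x)"

definition convex_in :: "'p set \<Rightarrow> ('p \<Rightarrow> 'p \<Rightarrow> bool) \<Rightarrow> 'p set \<Rightarrow> bool" where
  "convex_in Y lt B \<longleftrightarrow> (\<forall>x\<in>B. \<forall>z\<in>B. \<forall>y\<in>Y. lt x y \<and> lt y z \<longrightarrow> y \<in> B)"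

definition convex_order :: "'p set \<Rightarrow> ('p \<Rightarrow> 'p \<Rightarrow> rat) \<Rightarrow> ('p \<Rightarrow> 'p \<Rightarrow> bool) \<Rightarrow> bool" where
  "convex_order Y d lt \<longleftrightarrow> strict_linear_on Y lt \<and>
     (\<forall>x\<in>Y. \<forall>r. convex_in Y lt {y\<in>Y. d x y \<le> r} \<and> convex_in Y lt {y\<in>Y. d x y < r})"

definition cous :: "'p set \<Rightarrow> ('p \<Rightarrow> 'p \<Rightarrow> rat) \<Rightarrow> rat set \<Rightarrow> ('p \<Rightarrow> 'p \<Rightarrow> bool) \<Rightarrow> bool" where
  "cous Y d E lt \<longleftrightarrow> E \<subseteq> Qnn \<and> 0 \<in> E \<and> ultrametric_on Y E d \<and> convex_order Y d lt"

definition dc_emb ::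
  "'p set \<Rightarrow> ('p \<Rightarrow> 'p \<Rightarrow> rat) \<Rightarrow> rat set \<Rightarrow> ('p \<Rightarrow> 'p \<Rightarrow> bool) \<Rightarrow>
   'q set \<Rightarrow> ('q \<Rightarrow> 'q \<Rightarrow> rat) \<Rightarrow> rat set \<Rightarrow> ('q \<Rightarrow> 'q \<Rightarrow> bool) \<Rightarrow>
   ('p \<Rightarrow> 'q) \<Rightarrow> (rat \<Rightarrow> rat) \<Rightarrow> bool" where
  "dc_emb Y d E lt Y' d' E' lt' f Df \<longleftrightarrow>
     inj_on f Y \<and> f ` Y \<subseteq> Y' \<and> Df ` E \<subseteq> E' \<and> strict_mono_on E Df \<and> Df 0 = 0 \<and>
     (\<forall>x\<in>Y. \<forall>y\<in>Y. d' (f x) (f y) = Df (d x y)) \<and>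
     (\<forall>x\<in>Y. \<forall>y\<in>Y. lt x y \<longrightarrow> lt' (f x) (f y))"

text \<open>Fraisse limit of the class of finite convexly ordered two-sorted ultrametric spaces:
countable, itself convexly ordered with distance set Qnn, and with the extension property
(finite structures are coded on nat).\<close>
definition extension_property :: "'a set \<Rightarrow> ('a \<Rightarrow> 'a \<Rightarrow> rat) \<Rightarrow> ('a \<Rightarrow> 'a \<Rightarrow> bool) \<Rightarrow> bool" where
  "extension_property X d lt \<longleftrightarrow>
    (\<forall>(Y::nat set) dY E ltY Y' E' f Df.
       finite Y \<and> finite E \<and> cous Y dY E ltY \<and>
       Y' \<subseteq> Y \<and> E' \<subseteq> E \<and> 0 \<in> E' \<and> (\<forall>x\<in>Y'. \<forall>y\<in>Y'. dY x y \<in> E') \<and>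
       dc_emb Y' dY E' ltY X d Qnn lt f Df \<longrightarrow>
       (\<exists>g Dg. dc_emb Y dY E ltY X d Qnn lt g Dg \<and>
              (\<forall>y\<in>Y'. g y = f y) \<and> (\<forall>e\<in>E'. Dg e = Df e)))"

definition fraisse_limit_U :: "'a set \<Rightarrow> ('a \<Rightarrow> 'a \<Rightarrow> rat) \<Rightarrow> ('a \<Rightarrow> 'a \<Rightarrow> bool) \<Rightarrow> bool" where
  "fraisse_limit_U X d lt \<longleftrightarrow> countable X \<and> cous X d Qnn lt \<and> extension_property X d lt"

definition AutU_carrier :: "'a set \<Rightarrow> ('a \<Rightarrow> 'a \<Rightarrow> rat) \<Rightarrow> ('a \<Rightarrow> 'a \<Rightarrow> bool) \<Rightarrow> (('a \<Rightarrow> 'a) \<times> (rat \<Rightarrow> rat)) set" where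
  "AutU_carrier X d lt = {(f, g). f \<in> extensional X \<and> g \<in> extensional Qnn \<and>
     bij_betw f X X \<and> bij_betw g Qnn Qnn \<and> strict_mono_on Qnn g \<and> g 0 = 0 \<and>
     (\<forall>x\<in>X. \<forall>y\<in>X. d (f x) (f y) = g (d x y)) \<and>
     (\<forall>x\<in>X. \<forall>y\<in>X. lt x y \<longrightarrow> lt (f x) (f y))}"

definition AutU :: "'a set \<Rightarrow> ('a \<Rightarrow> 'a \<Rightarrow> rat) \<Rightarrow> ('a \<Rightarrow> 'a \<Rightarrow> bool) \<Rightarrow> (('a \<Rightarrow> 'a) \<times> (rat \<Rightarrow> rat)) monoid" where
  "AutU X d lt = \<lparr>carrier = AutU_carrier X d lt,
     mult = (\<lambda>p q. (compose X (fst p) (fst q), compose Qnn (snd p) (snd q))),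
     one = (restrict id X, restrict id Qnn)\<rparr>"

definition AutU_top :: "'a set \<Rightarrow> ('a \<Rightarrow> 'a \<Rightarrow> rat) \<Rightarrow> ('a \<Rightarrow> 'a \<Rightarrow> bool) \<Rightarrow> (('a \<Rightarrow> 'a) \<times> (rat \<Rightarrow> rat)) topology" where
  "AutU_top X d lt = subtopology
     (prod_topology (product_topology (\<lambda>_. discrete_topology X) X)
                    (product_topology (\<lambda>_. discrete_topology Qnn) Qnn))
     (AutU_carrier X d lt)"

definition IsoU :: "'a set \<Rightarrow> ('a \<Rightarrow> 'a \<Rightarrow> rat) \<Rightarrow> ('a \<Rightarrow> 'a \<Rightarrow> bool) \<Rightarrow> (('a \<Rightarrow> 'a) \<times> (rat \<Rightarrow> rat)) monoid" where
  "IsoU X d lt = (AutU X d lt)\<lparr>carrier := {p \<in> AutU_carrier X d lt. snd p = restrict id Qnn}\<rparr>"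

definition IsoU_top :: "'a set \<Rightarrow> ('a \<Rightarrow> 'a \<Rightarrow> rat) \<Rightarrow> ('a \<Rightarrow> 'a \<Rightarrow> bool) \<Rightarrow> (('a \<Rightarrow> 'a) \<times> (rat \<Rightarrow> rat)) topology" where
  "IsoU_top X d lt = subtopology (AutU_top X d lt) (carrier (IsoU X d lt))"

definition AutQ :: "(rat \<Rightarrow> rat) monoid" where
  "AutQ = \<lparr>carrier = {g \<in> extensional Qnn. bij_betw g Qnn Qnn \<and> strict_mono_on Qnn g},
     mult = compose Qnn, one = restrict id Qnn\<rparr>"

definition AutQ_top :: "(rat \<Rightarrow> rat) topology" where
  "AutQ_top = subtopology (product_topology (\<lambda>_. discrete_topology Qnn) Qnn) (carrier AutQ)"

definition topological_group :: "('g, 'm) monoid_scheme \<Rightarrow> 'g topology \<Rightarrow> bool" where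
  "topological_group G T \<longleftrightarrow> group G \<and> topspace T = carrier G \<and>
     continuous_map (prod_topology T T) T (\<lambda>(x, y). x \<otimes>\<^bsub>G\<^esub> y) \<and>
     continuous_map T T (\<lambda>x. inv\<^bsub>G\<^esub> x)"

definition short_exact_top ::
  "('a, 'm) monoid_scheme \<Rightarrow> 'a topology \<Rightarrow> ('b, 'n) monoid_scheme \<Rightarrow> 'b topology \<Rightarrow>
   ('c, 'o) monoid_scheme \<Rightarrow> 'c topology \<Rightarrow> ('a \<Rightarrow> 'b) \<Rightarrow> ('b \<Rightarrow> 'c) \<Rightarrow> bool" where
  "short_exact_top G1 T1 H TH G2 T2 i p \<longleftrightarrow>
     topological_group G1 T1 \<and> topological_group H TH \<and> topological_group G2 T2 \<and>
     i \<in> hom G1 H \<and> inj_on i (carrier G1) \<and> continuous_map T1 TH i \<and> embedding_map T1 TH i \<and>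
     p \<in> hom H G2 \<and> p ` carrier H = carrier G2 \<and> continuous_map TH T2 p \<and> open_map TH T2 p \<and>
     i ` carrier G1 = kernel H G2 p"

definition semidirect ::
  "('g, 'm) monoid_scheme \<Rightarrow> ('h, 'n) monoid_scheme \<Rightarrow> ('g, 'o) monoid_scheme \<Rightarrow> ('h \<Rightarrow> 'g) \<Rightarrow> ('g \<times> 'h) monoid" where
  "semidirect N H G s = \<lparr>carrier = carrier N \<times> carrier H,
     mult = (\<lambda>a b. (fst a \<otimes>\<^bsub>G\<^esub> s (snd a) \<otimes>\<^bsub>G\<^esub> fst b \<otimes>\<^bsub>G\<^esub> inv\<^bsub>G\<^esub> (s (snd a)),
                    snd a \<otimes>\<^bsub>H\<^esub> snd b)),
     one = (\<one>\<^bsub>N\<^esub>, \<one>\<^bsub>H\<^esub>)\<rparr>"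

end

theory Submission
  imports Defs
begin


section \<open>The concrete model\<close>

definition MU :: "(rat \<Rightarrow> rat) set" where
  "MU = {u. finite {r. u r \<noteq> 0} \<and> (\<forall>r. u r \<noteq> 0 \<longrightarrow> 0 < r)}"

definition dM :: "(rat \<Rightarrow> rat) \<Rightarrow> (rat \<Rightarrow> rat) \<Rightarrow> rat" where
  "dM u v = (if u = v then 0 else Max {r. u r \<noteq> v r})"

definition ltM :: "(rat \<Rightarrow> rat) \<Rightarrow> (rat \<Rightarrow> rat) \<Rightarrow> bool" where
  "ltM u v \<longleftrightarrow> u \<noteq> v \<and> u (dM u v) < v (dM u v)"

lemma MU_diff_finite:
  assumes "u \<in> MU" "v \<in> MU" shows "finite {r. u r \<noteq> v r}"
proof -
  have "{r. u r \<noteq> v r} \<subseteq> {r. u r \<noteq> 0} \<union> {r. v r \<noteq> 0}" by auto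
  thus ?thesis by (rule finite_subset) (use assms in \<open>auto simp: MU_def\<close>)
qed

lemma MU_diff_pos:
  assumes "u \<in> MU" "v \<in> MU" "u r \<noteq> v r" shows "0 < r"
  using assms unfolding MU_def by (cases "u r = 0") auto

lemma dM_neq:
  assumes "u \<in> MU" "v \<in> MU" "u \<noteq> v"
  shows "u (dM u v) \<noteq> v (dM u v)" "0 < dM u v"
proof -
  have ne: "{r. u r \<noteq> v r} \<noteq> {}" using assms(3) by auto
  have "Max {r. u r \<noteq> v r} \<in> {r. u r \<noteq> v r}" by (rule Max_in[OF MU_diff_finite[OF assms(1,2)] ne])
  hence "dM u v \<in> {r. u r \<noteq> v r}" using assms(3) by (simp add: dM_def)
  thus "u (dM u v) \<noteq> v (dM u v)" by simp
  thus "0 < dM u v" using MU_diff_pos[OF assms(1,2)] by blast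
qed

lemma dM_above:
  assumes "u \<in> MU" "v \<in> MU" "dM u v < s" shows "u s = v s"
proof (rule ccontr)
  assume a: "u s \<noteq> v s"
  hence "u \<noteq> v" by auto
  hence "s \<le> dM u v" unfolding dM_def using MU_diff_finite[OF assms(1,2)] a by simp
  thus False using assms(3) by simp
qed

lemma dM_nonneg: "u \<in> MU \<Longrightarrow> v \<in> MU \<Longrightarrow> 0 \<le> dM u v"
  using dM_neq[of u v] by (cases "u = v") (auto simp: dM_def)

lemma dM_self[simp]: "dM u u = 0" by (simp add: dM_def)

lemma dM_eq0: "u \<in> MU \<Longrightarrow> v \<in> MU \<Longrightarrow> dM u v = 0 \<longleftrightarrow> u = v"
  by (metis dM_neq(2) dM_self less_irrefl)

lemma dM_sym: "dM u v = dM v u"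
proof -
  have "{r. u r \<noteq> v r} = {r. v r \<noteq> u r}" by auto
  thus ?thesis unfolding dM_def by auto
qed

lemma dM_eqI:
  assumes "u \<in> MU" "v \<in> MU" "u t \<noteq> v t" "\<And>s. t < s \<Longrightarrow> u s = v s"
  shows "dM u v = t"
proof -
  have uv: "u \<noteq> v" using assms by auto
  have "t \<le> dM u v" unfolding dM_def using uv MU_diff_finite[OF assms(1,2)] assms(3) by simp
  moreover have "\<not> t < dM u v" using assms(4)[of "dM u v"] dM_neq(1)[OF assms(1,2) uv] by blast
  ultimately show ?thesis by simp
qed

lemma dM_leI:
  assumes "u \<in> MU" "v \<in> MU" "0 \<le> t" "\<And>s. t < s \<Longrightarrow> u s = v s"
  shows "dM u v \<le> t"
proof (cases "u = v")
  case True thus ?thesis using assms by simp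
next
  case False
  show ?thesis
  proof (rule ccontr)
    assume "\<not> dM u v \<le> t" hence "t < dM u v" by simp
    thus False using dM_neq(1)[OF assms(1,2) False] assms(4)[of "dM u v"] by simp
  qed
qed

lemma dM_ultra:
  assumes "u \<in> MU" "v \<in> MU" "w \<in> MU"
  shows "dM u w \<le> max (dM u v) (dM v w)"
proof (rule dM_leI[OF assms(1,3)])
  show "0 \<le> max (dM u v) (dM v w)" using dM_nonneg[OF assms(1,2)] by simp
  fix s assume "max (dM u v) (dM v w) < s"
  hence "dM u v < s" "dM v w < s" by auto
  thus "u s = w s" using dM_above[OF assms(1,2), of s] dM_above[OF assms(2,3), of s] by simp
qed

lemma ltM_total:
  assumes "u \<in> MU" "v \<in> MU" "u \<noteq> v" shows "ltM u v \<or> ltM v u"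
  using dM_neq(1)[OF assms] assms(3) unfolding ltM_def dM_sym[of v u] by auto

lemma ltM_asym: "ltM u v \<Longrightarrow> \<not> ltM v u"
  unfolding ltM_def dM_sym[of v u] by auto

lemma ltM_irrefl: "\<not> ltM u u" by (simp add: ltM_def)

lemma ltM_trans:
  assumes "u \<in> MU" "v \<in> MU" "w \<in> MU" "ltM u v" "ltM v w"
  shows "ltM u w"
proof -
  define a where "a = dM u v"
  define b where "b = dM v w"
  have uv: "u a < v a" and vw: "v b < w b" using assms(4,5) unfolding ltM_def a_def b_def by auto
  have au: "\<And>s. a < s \<Longrightarrow> u s = v s" using dM_above[OF assms(1,2)] a_def by auto
  have bu: "\<And>s. b < s \<Longrightarrow> v s = w s" using dM_above[OF assms(2,3)] b_def by auto
  consider "a < b" | "b < a" | "a = b" by linarith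
  thus ?thesis
  proof cases
    case 1
    have "dM u w = b" by (rule dM_eqI[OF assms(1,3)]) (use 1 au bu vw in auto)
    thus ?thesis unfolding ltM_def using 1 au vw by auto
  next
    case 2
    have "dM u w = a" by (rule dM_eqI[OF assms(1,3)]) (use 2 au bu uv in auto)
    thus ?thesis unfolding ltM_def using 2 bu uv by auto
  next
    case 3
    have "dM u w = a" by (rule dM_eqI[OF assms(1,3)]) (use 3 au bu uv vw in auto)
    thus ?thesis unfolding ltM_def using 3 uv vw by auto
  qed
qed

lemma MU_between:
  assumes "x \<in> MU" "a \<in> MU" "c \<in> MU" "y \<in> MU"
    "dM x a < dM x y" "dM x c < dM x y"
  shows "\<not> (ltM a y \<and> ltM y c)"
proof
  assume h: "ltM a y \<and> ltM y c"
  define t where "t = dM x y"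
  have xy: "x \<noteq> y" using assms(5) dM_nonneg[OF assms(1,2)] by auto
  have xyt: "x t \<noteq> y t" using dM_neq(1)[OF assms(1,4) xy] t_def by simp
  have abv: "\<And>s. t < s \<Longrightarrow> x s = y s" using dM_above[OF assms(1,4)] t_def by auto
  have ax: "\<And>s. t \<le> s \<Longrightarrow> x s = a s" using dM_above[OF assms(1,2)] assms(5) t_def by fastforce
  have cx: "\<And>s. t \<le> s \<Longrightarrow> x s = c s" using dM_above[OF assms(1,3)] assms(6) t_def by fastforce
  have "dM a y = t" by (rule dM_eqI[OF assms(2,4)]) (use xyt ax abv in auto)
  moreover have "dM y c = t" by (rule dM_eqI[OF assms(4,3)]) (use xyt cx abv in auto)
  ultimately show False using h ax[of t] cx[of t] unfolding ltM_def by auto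
qed

lemma cous_MU: "cous MU dM Qnn ltM"
  unfolding cous_def
proof (intro conjI)
  show "ultrametric_on MU Qnn dM" unfolding ultrametric_on_def Qnn_def
    using dM_nonneg dM_eq0 dM_sym dM_ultra by auto
  show "convex_order MU dM ltM" unfolding convex_order_def strict_linear_on_def
  proof (intro conjI ballI allI impI)
    fix x r show "convex_in MU ltM {y \<in> MU. dM x y \<le> r}" if "x \<in> MU"
      unfolding convex_in_def proof (intro ballI impI)
      fix a c y assume a: "a \<in> {y \<in> MU. dM x y \<le> r}" and c: "c \<in> {y \<in> MU. dM x y \<le> r}"
        and y: "y \<in> MU" and h: "ltM a y \<and> ltM y c"
      show "y \<in> {y \<in> MU. dM x y \<le> r}"
        using MU_between[OF that _ _ y, of a c] a c h y by force
    qed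
    show "convex_in MU ltM {y \<in> MU. dM x y < r}" if "x \<in> MU"
      unfolding convex_in_def proof (intro ballI impI)
      fix a c y assume a: "a \<in> {y \<in> MU. dM x y < r}" and c: "c \<in> {y \<in> MU. dM x y < r}"
        and y: "y \<in> MU" and h: "ltM a y \<and> ltM y c"
      show "y \<in> {y \<in> MU. dM x y < r}"
        using MU_between[OF that _ _ y, of a c] a c h y by force
    qed
  next
    fix x assume "x \<in> MU" thus "\<not> ltM x x" by (simp add: ltM_irrefl)
  next
    fix x y z assume "x \<in> MU" "y \<in> MU" "z \<in> MU" "ltM x y \<and> ltM y z"
    thus "ltM x z" using ltM_trans by blast
  next
    fix x y assume "x \<in> MU" "y \<in> MU" "x \<noteq> y"
    thus "ltM x y \<or> ltM y x" using ltM_total by blast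
  qed
qed (auto simp: Qnn_def)

lemma countable_MU: "countable MU"
proof (rule countable_image_inj_on)
  let ?g = "\<lambda>u::rat\<Rightarrow>rat. (\<lambda>r. (r, u r)) ` {r. u r \<noteq> 0}"
  show "countable (?g ` MU)"
    by (rule countable_subset[OF _ countable_Collect_finite]) (auto simp: MU_def)
  show "inj_on ?g MU"
  proof (rule inj_onI)
    fix u v assume "u \<in> MU" "v \<in> MU" and e: "?g u = ?g v"
    show "u = v"
    proof
      fix r show "u r = v r"
      proof (cases "u r = 0")
        case True
        show ?thesis proof (rule ccontr)
          assume "u r \<noteq> v r"
          hence "(r, v r) \<in> ?g v" using True by auto
          thus False using e True by auto
        qed
      next
        case False
        hence "(r, u r) \<in> ?g v" using e by (metis (mono_tags, lifting) image_eqI mem_Collect_eq)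
        thus ?thesis by auto
      qed
    qed
  qed
qed

lemma zero_MU: "(\<lambda>_. 0) \<in> MU" by (simp add: MU_def)



locale FL =
  fixes X :: "'a set" and d :: "'a \<Rightarrow> 'a \<Rightarrow> rat" and lt :: "'a \<Rightarrow> 'a \<Rightarrow> bool"
  assumes FL: "fraisse_limit_U X d lt"
begin

lemma cousX: "cous X d Qnn lt" using FL unfolding fraisse_limit_U_def by auto
lemma countX: "countable X" using FL unfolding fraisse_limit_U_def by auto
lemma extX: "extension_property X d lt" using FL unfolding fraisse_limit_U_def by auto

lemma um: "ultrametric_on X Qnn d" using cousX unfolding cous_def by (elim conjE)
lemma co: "convex_order X d lt" using cousX unfolding cous_def by (elim conjE)
lemma sl: "strict_linear_on X lt" using co unfolding convex_order_def by (elim conjE)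
lemmas um1 = um[unfolded ultrametric_on_def, THEN conjunct1]
lemmas um2 = um[unfolded ultrametric_on_def, THEN conjunct2, THEN conjunct1]
lemmas um3 = um[unfolded ultrametric_on_def, THEN conjunct2, THEN conjunct2, THEN conjunct1]
lemmas um4 = um[unfolded ultrametric_on_def, THEN conjunct2, THEN conjunct2, THEN conjunct2]
lemmas sl1 = sl[unfolded strict_linear_on_def, THEN conjunct1]
lemmas sl2 = sl[unfolded strict_linear_on_def, THEN conjunct2, THEN conjunct1]
lemmas sl3 = sl[unfolded strict_linear_on_def, THEN conjunct2, THEN conjunct2]
lemma dX_nonneg: "x \<in> X \<Longrightarrow> y \<in> X \<Longrightarrow> 0 \<le> d x y"
  using um1[rule_format, of x y] unfolding Qnn_def by simp
lemma dX_eq0: "x \<in> X \<Longrightarrow> y \<in> X \<Longrightarrow> d x y = 0 \<longleftrightarrow> x = y"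
  by (rule um2[rule_format])
lemma dX_self: "x \<in> X \<Longrightarrow> d x x = 0" using dX_eq0 by simp
lemma dX_sym: "x \<in> X \<Longrightarrow> y \<in> X \<Longrightarrow> d x y = d y x"
  by (rule um3[rule_format])
lemma dX_ultra: "x \<in> X \<Longrightarrow> y \<in> X \<Longrightarrow> z \<in> X \<Longrightarrow> d x z \<le> max (d x y) (d y z)"
  by (rule um4[rule_format])
lemma lt_irrefl: "x \<in> X \<Longrightarrow> \<not> lt x x"
  by (rule sl1[rule_format])
lemma lt_trans: "x \<in> X \<Longrightarrow> y \<in> X \<Longrightarrow> z \<in> X \<Longrightarrow> lt x y \<Longrightarrow> lt y z \<Longrightarrow> lt x z"
  using sl2[rule_format, of x y z] by simp
lemma lt_total: "x \<in> X \<Longrightarrow> y \<in> X \<Longrightarrow> x \<noteq> y \<Longrightarrow> lt x y \<or> lt y x"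
  using sl3[rule_format, of x y] by simp
lemma lt_asym: "x \<in> X \<Longrightarrow> y \<in> X \<Longrightarrow> lt x y \<Longrightarrow> \<not> lt y x"
proof
  assume A: "x \<in> X" "y \<in> X" "lt x y" "lt y x"
  have "lt x x" by (rule lt_trans[OF A(1) A(2) A(1) A(3) A(4)])
  thus False using lt_irrefl[OF A(1)] by simp
qed
lemma conv_le: "x \<in> X \<Longrightarrow> a \<in> X \<Longrightarrow> c \<in> X \<Longrightarrow> y \<in> X \<Longrightarrow> d x a \<le> r \<Longrightarrow> d x c \<le> r
   \<Longrightarrow> lt a y \<Longrightarrow> lt y c \<Longrightarrow> d x y \<le> r"
proof -
  assume A: "x \<in> X" "a \<in> X" "c \<in> X" "y \<in> X" "d x a \<le> r" "d x c \<le> r" "lt a y" "lt y c"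
  have "convex_in X lt {y \<in> X. d x y \<le> r}"
    using co[unfolded convex_order_def, THEN conjunct2, rule_format, OF A(1), of r] by simp
  hence "y \<in> {y \<in> X. d x y \<le> r}" unfolding convex_in_def using A by blast
  thus ?thesis by simp
qed
lemma conv_lt: "x \<in> X \<Longrightarrow> a \<in> X \<Longrightarrow> c \<in> X \<Longrightarrow> y \<in> X \<Longrightarrow> d x a < r \<Longrightarrow> d x c < r
   \<Longrightarrow> lt a y \<Longrightarrow> lt y c \<Longrightarrow> d x y < r"
proof -
  assume A: "x \<in> X" "a \<in> X" "c \<in> X" "y \<in> X" "d x a < r" "d x c < r" "lt a y" "lt y c"
  have "convex_in X lt {y \<in> X. d x y < r}"
    using co[unfolded convex_order_def, THEN conjunct2, rule_format, OF A(1), of r] by simp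
  hence "y \<in> {y \<in> X. d x y < r}" unfolding convex_in_def using A by blast
  thus ?thesis by simp
qed

definition good :: "((rat \<Rightarrow> rat) \<times> 'a) set \<Rightarrow> bool" where
  "good R \<longleftrightarrow> finite R \<and> R \<subseteq> MU \<times> X \<and>
     (\<forall>a x b y. (a, x) \<in> R \<longrightarrow> (b, y) \<in> R \<longrightarrow> dM a b = d x y \<and> (ltM a b \<longrightarrow> lt x y))"

lemma exists_between:
  fixes L U :: "rat set"
  assumes "finite L" "finite U" "\<forall>l\<in>L. \<forall>u\<in>U. l < u"
  shows "\<exists>v. (\<forall>l\<in>L. l < v) \<and> (\<forall>u\<in>U. v < u)"
proof (cases "L = {}")
  case True
  show ?thesis
  proof (cases "U = {}")
    case True with \<open>L = {}\<close> show ?thesis by auto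
  next
    case False
    have "\<forall>u\<in>U. Min U - 1 < u" using Min_le[OF assms(2)] by fastforce
    thus ?thesis using True by blast
  qed
next
  case False
  show ?thesis
  proof (cases "U = {}")
    case True
    have "\<forall>l\<in>L. l < Max L + 1" using Max_ge[OF assms(1)] by fastforce
    thus ?thesis using True by blast
  next
    case F2: False
    have "Max L < Min U" using assms Max_in[OF assms(1) False] Min_in[OF assms(2) F2] by blast
    have "\<forall>l\<in>L. l < (Max L + Min U) / 2" using Max_ge[OF assms(1)] \<open>Max L < Min U\<close> by fastforce
    moreover have "\<forall>u\<in>U. (Max L + Min U) / 2 < u" using Min_le[OF assms(2)] \<open>Max L < Min U\<close> by fastforce
    ultimately show ?thesis by blast
  qed
qed

lemma good_insert_self:
  assumes g: "good R" and mx: "m \<in> MU" "x \<in> X"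
    and h: "\<And>a y. (a, y) \<in> R \<Longrightarrow> dM m a = d x y \<and> (ltM m a \<longrightarrow> lt x y) \<and> (ltM a m \<longrightarrow> lt y x)"
  shows "good (insert (m, x) R)"
proof -
  have RX: "\<And>a y. (a, y) \<in> R \<Longrightarrow> a \<in> MU \<and> y \<in> X" using g unfolding good_def by auto
  have gd: "\<And>a y b z. (a, y) \<in> R \<Longrightarrow> (b, z) \<in> R \<Longrightarrow> dM a b = d y z \<and> (ltM a b \<longrightarrow> lt y z)"
    using g unfolding good_def by blast
  have "dM a b = d y z \<and> (ltM a b \<longrightarrow> lt y z)"
    if A: "(a, y) \<in> insert (m, x) R" "(b, z) \<in> insert (m, x) R" for a y b z
  proof -
    consider "(a, y) = (m, x)" "(b, z) = (m, x)" | "(a, y) = (m, x)" "(b, z) \<in> R"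
      | "(a, y) \<in> R" "(b, z) = (m, x)" | "(a, y) \<in> R" "(b, z) \<in> R" using A by blast
    thus ?thesis
    proof cases
      case 1 thus ?thesis using dX_self[OF mx(2)] ltM_irrefl by auto
    next
      case 2 thus ?thesis using h[of b z] by auto
    next
      case 3 thus ?thesis using h[of a y] RX[of a y] dM_sym[of a m] dX_sym[OF _ mx(2), of y] by auto
    next
      case 4 thus ?thesis using gd by blast
    qed
  qed
  moreover have "finite (insert (m, x) R)" "insert (m, x) R \<subseteq> MU \<times> X"
    using g mx unfolding good_def by auto
  ultimately show ?thesis unfolding good_def by blast
qed

lemma back_step:
  assumes g: "good R" and x: "x \<in> X"
  shows "\<exists>m. good (insert (m, x) R)"
proof -
  have RX: "\<And>a y. (a, y) \<in> R \<Longrightarrow> a \<in> MU \<and> y \<in> X" using g unfolding good_def by auto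
  have gd: "\<And>a y b z. (a, y) \<in> R \<Longrightarrow> (b, z) \<in> R \<Longrightarrow> dM a b = d y z \<and> (ltM a b \<longrightarrow> lt y z)"
    using g unfolding good_def by blast
  have finR: "finite R" using g unfolding good_def by auto
  show ?thesis
  proof (cases "x \<in> Range R")
    case True
    then obtain a where "(a, x) \<in> R" by auto
    hence "insert (a, x) R = R" by auto
    thus ?thesis using g by metis
  next
    case notin: False
    show ?thesis
    proof (cases "R = {}")
      case True
      have "good (insert ((\<lambda>_. 0), x) R)"
        by (rule good_insert_self[OF g zero_MU x]) (use True in auto)
      thus ?thesis by blast
    next
      case Rne: False
      define r where "r = Min ((\<lambda>p. d x (snd p)) ` R)"
      have "r \<in> (\<lambda>p. d x (snd p)) ` R" unfolding r_def using finR Rne by (intro Min_in) auto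
      then obtain a0 y0 where a0R: "(a0, y0) \<in> R" and ry: "r = d x y0" by auto
      have rmin: "r \<le> d x y" if ay: "(a, y) \<in> R" for a y
      proof -
        have "d x (snd (a, y)) \<in> (\<lambda>p. d x (snd p)) ` R" using ay by (rule imageI)
        hence "r \<le> d x (snd (a, y))" unfolding r_def using finR by (intro Min_le) auto
        thus ?thesis by simp
      qed
      have a0: "a0 \<in> MU" and y0: "y0 \<in> X" using RX[OF a0R] by auto
      have xy0: "x \<noteq> y0" using notin a0R by auto
      have rpos: "0 < r" using dX_nonneg[OF x y0] dX_eq0[OF x y0] xy0 ry by auto
      have key: "d x y = max r (d y0 y)" if ay: "(a, y) \<in> R" for a y
      proof -
        have y: "y \<in> X" using RX[OF ay] by auto
        have m1: "d x y \<le> max r (d y0 y)" using dX_ultra[OF x y0 y] ry by simp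
        have "d y0 y \<le> max r (d x y)" using dX_ultra[OF y0 x y] ry dX_sym[OF x y0] by simp
        thus ?thesis using m1 rmin[OF ay] by linarith
      qed
      define Lv where "Lv = (\<lambda>p. fst p r) ` {p\<in>R. d y0 (snd p) \<le> r \<and> lt (snd p) x}"
      define Uv where "Uv = (\<lambda>p. fst p r) ` {p\<in>R. d y0 (snd p) \<le> r \<and> lt x (snd p)}"
      have sep: "\<forall>l\<in>Lv. \<forall>u\<in>Uv. l < u"
      proof (intro ballI)
        fix l u assume "l \<in> Lv" "u \<in> Uv"
        then obtain a y a' y' where ay: "(a, y) \<in> R" and "d y0 y \<le> r" "lt y x" "l = a r"
          and ay': "(a', y') \<in> R" "d y0 y' \<le> r" "lt x y'" "u = a' r"
          unfolding Lv_def Uv_def by auto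
        note h = this
        have y: "y \<in> X" "a \<in> MU" and y': "y' \<in> X" "a' \<in> MU" using RX ay ay'(1) by auto
        have yy': "lt y y'" using lt_trans[OF y(1) x y'(1)] h by blast
        have ne: "y \<noteq> y'" using yy' lt_irrefl y by auto
        have dyy: "dM a a' = d y y'" using gd[OF ay ay'(1)] by auto
        have aa': "a \<noteq> a'" using dyy dX_eq0[OF y(1) y'(1)] ne by auto
        have "ltM a a'"
        proof -
          have "\<not> ltM a' a" using gd[OF ay'(1) ay] lt_asym[OF y(1) y'(1) yy'] by auto
          thus ?thesis using ltM_total[OF y(2) y'(2) aa'] by auto
        qed
        have le: "d y y' \<le> r" using dX_ultra[OF y(1) y0 y'(1)] h dX_sym[OF y0 y(1)] by simp
        have dyx: "d y x = r" using key[OF ay] h dX_sym[OF x y(1)] by simp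
        have "\<not> d y y' < r"
        proof
          assume "d y y' < r"
          hence "d y x < r" using conv_lt[OF y(1) y(1) y'(1) x, of r] dX_self[OF y(1)] rpos h yy' by auto
          thus False using dyx by simp
        qed
        hence "dM a a' = r" using le dyy by simp
        thus "l < u" using \<open>ltM a a'\<close> h unfolding ltM_def by simp
      qed
      have fL: "finite Lv" unfolding Lv_def using finR by simp
      have fU: "finite Uv" unfolding Uv_def using finR by simp
      obtain v where vL: "\<forall>l\<in>Lv. l < v" and vU: "\<forall>u\<in>Uv. v < u"
        using exists_between[OF fL fU sep] by blast
      define m where "m = (\<lambda>s. if r < s then a0 s else if s = r then v else 0)"
      have mMU: "m \<in> MU"
      proof -
        have "{s. m s \<noteq> 0} \<subseteq> {s. a0 s \<noteq> 0} \<union> {r}" unfolding m_def by auto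
        moreover have "finite {s. a0 s \<noteq> 0}" using a0 unfolding MU_def by auto
        ultimately have "finite {s. m s \<noteq> 0}" using finite_subset by auto
        moreover have "\<forall>s. m s \<noteq> 0 \<longrightarrow> 0 < s" using a0 rpos unfolding m_def MU_def by auto
        ultimately show ?thesis unfolding MU_def by auto
      qed
      have "good (insert (m, x) R)"
      proof (rule good_insert_self[OF g mMU x])
        fix a y assume ay: "(a, y) \<in> R"
        have y: "y \<in> X" and a: "a \<in> MU" using RX[OF ay] by auto
        have gda: "dM a0 a = d y0 y" "ltM a0 a \<longrightarrow> lt y0 y" "ltM a a0 \<longrightarrow> lt y y0"
          using gd[OF a0R ay] gd[OF ay a0R] by auto
        show "dM m a = d x y \<and> (ltM m a \<longrightarrow> lt x y) \<and> (ltM a m \<longrightarrow> lt y x)"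
        proof (cases "r < d y0 y")
          case True
          define t where "t = d y0 y"
          have a0a: "a0 \<noteq> a" using gda(1) True rpos by auto
          have "a0 t \<noteq> a t" using dM_neq(1)[OF a0 a a0a] gda(1) t_def by simp
          moreover have mt: "m t = a0 t" using True t_def unfolding m_def by simp
          moreover have "\<And>s. t < s \<Longrightarrow> m s = a s"
            using dM_above[OF a0 a] gda(1) True t_def unfolding m_def by auto
          ultimately have dma: "dM m a = t" by (intro dM_eqI[OF mMU a]) auto
          have dxy: "d x y = t" using key[OF ay] True t_def by simp
          have Bx: "d y0 x \<le> r" using ry dX_sym[OF x y0] by simp
          have By0: "d y0 y0 \<le> r" using dX_self[OF y0] rpos by simp
          have nB: "\<not> d y0 y \<le> r" using True by simp
          have xyne: "x \<noteq> y" using dxy dX_self[OF x] True rpos t_def by auto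
          have o1: "ltM m a \<longrightarrow> lt x y"
          proof
            assume "ltM m a"
            hence "ltM a0 a" using dma mt gda(1) t_def a0a unfolding ltM_def by auto
            hence "lt y0 y" using gda by blast
            show "lt x y"
            proof (rule ccontr)
              assume "\<not> lt x y"
              hence "lt y x" using lt_total[OF x y xyne] by auto
              thus False using conv_le[OF y0 y0 x y By0 Bx \<open>lt y0 y\<close>] nB by auto
            qed
          qed
          have o2: "ltM a m \<longrightarrow> lt y x"
          proof
            assume "ltM a m"
            hence "ltM a a0" using dma mt gda(1) t_def a0a dM_sym[of a m] dM_sym[of a a0]
              unfolding ltM_def by auto
            hence "lt y y0" using gda by blast
            show "lt y x"
            proof (rule ccontr)
              assume "\<not> lt y x"
              hence "lt x y" using lt_total[OF x y xyne] by auto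
              thus False using conv_le[OF y0 x y0 y Bx By0 _ \<open>lt y y0\<close>] nB by auto
            qed
          qed
          show ?thesis using dma dxy o1 o2 by simp
        next
          case False
          hence le: "dM a0 a \<le> r" using gda(1) by simp
          have dxy: "d x y = r" using key[OF ay] False by simp
          have xyne: "x \<noteq> y" using dxy dX_self[OF x] rpos by auto
          have tot: "lt y x \<or> lt x y" using lt_total[OF x y xyne] by auto
          have inL: "lt y x \<Longrightarrow> a r \<in> Lv" unfolding Lv_def using ay False
            by (intro image_eqI[of _ _ "(a, y)"]) auto
          have inU: "lt x y \<Longrightarrow> a r \<in> Uv" unfolding Uv_def using ay False
            by (intro image_eqI[of _ _ "(a, y)"]) auto
          have mr: "m r = v" unfolding m_def by simp
          have "v \<noteq> a r"
          proof (cases "lt y x")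
            case True thus ?thesis using inL vL by fastforce
          next
            case False thus ?thesis using tot inU vU by fastforce
          qed
          moreover have "\<And>s. r < s \<Longrightarrow> m s = a s"
            using dM_above[OF a0 a] le unfolding m_def by auto
          ultimately have dma: "dM m a = r" using mr by (intro dM_eqI[OF mMU a]) auto
          have o1: "ltM m a \<longrightarrow> lt x y"
          proof
            assume "ltM m a"
            hence "v < a r" using dma mr unfolding ltM_def by simp
            thus "lt x y" using tot inL vL by fastforce
          qed
          have o2: "ltM a m \<longrightarrow> lt y x"
          proof
            assume "ltM a m"
            hence "a r < v" using dma mr dM_sym[of a m] unfolding ltM_def by simp
            thus "lt y x" using tot inU vU by fastforce
          qed
          show ?thesis using dma dxy o1 o2 by simp
        qed
      qed
      thus ?thesis by blast
    qed
  qed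
qed


lemma good_fun: assumes g: "good R" and ay: "(a, y) \<in> R" and ay': "(a, y') \<in> R" shows "y = y'"
proof -
  have "dM a a = d y y'" using g ay ay' unfolding good_def by blast
  moreover have "y \<in> X" "y' \<in> X" using g ay ay' unfolding good_def by auto
  ultimately show ?thesis using dX_eq0 by simp
qed

lemma cous_pullback:
  assumes c: "cous S dd Qnn ll" and inj: "inj_on h Y" and hY: "h ` Y \<subseteq> S"
    and E: "E \<subseteq> Qnn" "0 \<in> E" and dE: "\<forall>i\<in>Y. \<forall>j\<in>Y. dd (h i) (h j) \<in> E"
  shows "cous Y (\<lambda>i j. dd (h i) (h j)) E (\<lambda>i j. ll (h i) (h j))"
proof -
  have um: "ultrametric_on S Qnn dd" using c unfolding cous_def by (elim conjE)
  have co: "convex_order S dd ll" using c unfolding cous_def by (elim conjE)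
  have sl: "strict_linear_on S ll" using co unfolding convex_order_def by (elim conjE)
  note u2 = um[unfolded ultrametric_on_def, THEN conjunct2, THEN conjunct1, rule_format]
  note u3 = um[unfolded ultrametric_on_def, THEN conjunct2, THEN conjunct2, THEN conjunct1, rule_format]
  note u4 = um[unfolded ultrametric_on_def, THEN conjunct2, THEN conjunct2, THEN conjunct2, rule_format]
  note s1 = sl[unfolded strict_linear_on_def, THEN conjunct1, rule_format]
  note s2 = sl[unfolded strict_linear_on_def, THEN conjunct2, THEN conjunct1, rule_format]
  note s3 = sl[unfolded strict_linear_on_def, THEN conjunct2, THEN conjunct2, rule_format]
  note cv = co[unfolded convex_order_def, THEN conjunct2, rule_format]
  have hin: "\<And>i. i \<in> Y \<Longrightarrow> h i \<in> S" using hY by auto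
  have U: "ultrametric_on Y E (\<lambda>i j. dd (h i) (h j))"
    unfolding ultrametric_on_def
  proof (intro conjI ballI)
    fix x y assume "x \<in> Y" "y \<in> Y"
    thus "dd (h x) (h y) \<in> E" using dE by blast
    show "(dd (h x) (h y) = 0) = (x = y)" using u2[OF hin[OF \<open>x \<in> Y\<close>] hin[OF \<open>y \<in> Y\<close>]]
      inj_onD[OF inj _ \<open>x \<in> Y\<close> \<open>y \<in> Y\<close>] by auto
    show "dd (h x) (h y) = dd (h y) (h x)" by (rule u3[OF hin[OF \<open>x \<in> Y\<close>] hin[OF \<open>y \<in> Y\<close>]])
    fix z assume "z \<in> Y"
    show "dd (h x) (h z) \<le> max (dd (h x) (h y)) (dd (h y) (h z))"
      by (rule u4[OF hin[OF \<open>x \<in> Y\<close>] hin[OF \<open>y \<in> Y\<close>] hin[OF \<open>z \<in> Y\<close>]])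
  qed
  have SL: "strict_linear_on Y (\<lambda>i j. ll (h i) (h j))"
    unfolding strict_linear_on_def
  proof (intro conjI ballI impI)
    fix x assume "x \<in> Y" thus "\<not> ll (h x) (h x)" using s1 hin by blast
  next
    fix x y z assume "x \<in> Y" "y \<in> Y" "z \<in> Y" "ll (h x) (h y) \<and> ll (h y) (h z)"
    thus "ll (h x) (h z)" using s2[OF hin hin hin] by blast
  next
    fix x y assume "x \<in> Y" "y \<in> Y" "x \<noteq> y"
    hence "h x \<noteq> h y" using inj_onD[OF inj] by blast
    thus "ll (h x) (h y) \<or> ll (h y) (h x)" using s3[OF hin hin] \<open>x \<in> Y\<close> \<open>y \<in> Y\<close> by blast
  qed
  have CV: "convex_in Y (\<lambda>i j. ll (h i) (h j)) {y \<in> Y. dd (h x) (h y) \<le> r}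
     \<and> convex_in Y (\<lambda>i j. ll (h i) (h j)) {y \<in> Y. dd (h x) (h y) < r}" if x: "x \<in> Y" for x r
  proof -
    have c1: "convex_in S ll {y \<in> S. dd (h x) y \<le> r}" and c2: "convex_in S ll {y \<in> S. dd (h x) y < r}"
      using cv[OF hin[OF x], of r] by auto
    show ?thesis unfolding convex_in_def
    proof (intro conjI ballI impI)
      fix a c y assume a: "a \<in> {y \<in> Y. dd (h x) (h y) \<le> r}" and c: "c \<in> {y \<in> Y. dd (h x) (h y) \<le> r}"
        and y: "y \<in> Y" and l: "ll (h a) (h y) \<and> ll (h y) (h c)"
      have "h a \<in> {y \<in> S. dd (h x) y \<le> r}" "h c \<in> {y \<in> S. dd (h x) y \<le> r}" "h y \<in> S"
        using a c y hin by auto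
      hence "h y \<in> {y \<in> S. dd (h x) y \<le> r}" using c1 l unfolding convex_in_def by blast
      thus "y \<in> {y \<in> Y. dd (h x) (h y) \<le> r}" using y by simp
    next
      fix a c y assume a: "a \<in> {y \<in> Y. dd (h x) (h y) < r}" and c: "c \<in> {y \<in> Y. dd (h x) (h y) < r}"
        and y: "y \<in> Y" and l: "ll (h a) (h y) \<and> ll (h y) (h c)"
      have "h a \<in> {y \<in> S. dd (h x) y < r}" "h c \<in> {y \<in> S. dd (h x) y < r}" "h y \<in> S"
        using a c y hin by auto
      hence "h y \<in> {y \<in> S. dd (h x) y < r}" using c2 l unfolding convex_in_def by blast
      thus "y \<in> {y \<in> Y. dd (h x) (h y) < r}" using y by simp
    qed
  qed
  have "convex_order Y (\<lambda>i j. dd (h i) (h j)) (\<lambda>i j. ll (h i) (h j))"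
    unfolding convex_order_def using SL CV by blast
  thus ?thesis unfolding cous_def using E U by blast
qed

lemma forth_step:
  assumes g: "good R" and m: "m \<in> MU"
  shows "\<exists>x. good (insert (m, x) R)"
proof (cases "m \<in> Domain R")
  case True
  then obtain x where "(m, x) \<in> R" by auto
  hence "insert (m, x) R = R" by auto
  thus ?thesis using g by metis
next
  case notin: False
  have RX: "\<And>a y. (a, y) \<in> R \<Longrightarrow> a \<in> MU \<and> y \<in> X" using g unfolding good_def by auto
  have gd: "\<And>a y b z. (a, y) \<in> R \<Longrightarrow> (b, z) \<in> R \<Longrightarrow> dM a b = d y z \<and> (ltM a b \<longrightarrow> lt y z)"
    using g unfolding good_def by blast
  have finR: "finite R" using g unfolding good_def by auto
  define enc where "enc = to_nat_on MU"
  define dec where "dec = from_nat_into MU"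
  have de: "\<And>a. a \<in> MU \<Longrightarrow> dec (enc a) = a" unfolding enc_def dec_def using countable_MU by simp
  define Y where "Y = enc ` insert m (Domain R)"
  define Y' where "Y' = enc ` Domain R"
  define dY where "dY = (\<lambda>i j. dM (dec i) (dec j))"
  define ltY where "ltY = (\<lambda>i j. ltM (dec i) (dec j))"
  define E where "E = insert 0 ((\<lambda>(i, j). dY i j) ` (Y \<times> Y))"
  define f where "f = (\<lambda>i. SOME y. (dec i, y) \<in> R)"
  have DomMU: "Domain R \<subseteq> MU" using RX by auto
  have decY: "dec i \<in> insert m (Domain R)" if iY: "i \<in> Y" for i
  proof -
    obtain a where a: "a \<in> insert m (Domain R)" "i = enc a" using iY unfolding Y_def by auto
    have "a \<in> MU" using a(1) DomMU m by auto
    thus ?thesis using de a by simp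
  qed
  have decY': "dec i \<in> Domain R" if iY: "i \<in> Y'" for i
  proof -
    obtain a where a: "a \<in> Domain R" "i = enc a" using iY unfolding Y'_def by auto
    have "a \<in> MU" using a(1) DomMU by auto
    thus ?thesis using de a by simp
  qed
  have fR: "\<And>i. i \<in> Y' \<Longrightarrow> (dec i, f i) \<in> R"
    unfolding f_def using decY' by (meson DomainE someI)
  have fenc: "\<And>a y. (a, y) \<in> R \<Longrightarrow> f (enc a) = y"
  proof -
    fix a y assume ay: "(a, y) \<in> R"
    have "enc a \<in> Y'" unfolding Y'_def using ay by auto
    hence "(dec (enc a), f (enc a)) \<in> R" by (rule fR)
    hence "(a, f (enc a)) \<in> R" using de RX[OF ay] by simp
    thus "f (enc a) = y" using good_fun[OF g _ ay] by blast
  qed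
  have finY: "finite Y" unfolding Y_def using finR by (simp add: finite_Domain)
  have finE: "finite E" unfolding E_def using finY by simp
  have Yrep: "enc (dec i) = i" if iY: "i \<in> Y" for i
  proof -
    obtain a where a: "a \<in> insert m (Domain R)" "i = enc a" using iY unfolding Y_def by auto
    have "a \<in> MU" using a(1) DomMU m by auto
    thus ?thesis using de a by simp
  qed
  have injY: "inj_on dec Y"
    by (rule inj_on_inverseI[where g = enc]) (rule Yrep)
  have decMU: "dec ` Y \<subseteq> MU" using decY DomMU m by blast
  have EQ: "E \<subseteq> Qnn"
  proof
    fix e assume "e \<in> E"
    then consider "e = 0" | i j where "i \<in> Y" "j \<in> Y" "e = dY i j" unfolding E_def by auto
    thus "e \<in> Qnn"
    proof cases
      case 1 thus ?thesis by (simp add: Qnn_def)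
    next
      case 2 thus ?thesis using dM_nonneg decMU unfolding dY_def Qnn_def by blast
    qed
  qed
  have E0: "0 \<in> E" unfolding E_def by simp
  have dE: "\<forall>i\<in>Y. \<forall>j\<in>Y. dM (dec i) (dec j) \<in> E"
  proof (intro ballI)
    fix i j assume "i \<in> Y" "j \<in> Y"
    hence "dY i j \<in> (\<lambda>(i, j). dY i j) ` (Y \<times> Y)" by (intro image_eqI[of _ _ "(i, j)"]) auto
    thus "dM (dec i) (dec j) \<in> E" unfolding E_def dY_def by simp
  qed
  have cY: "cous Y dY E ltY" unfolding dY_def ltY_def
    by (rule cous_pullback[where S=MU and dd=dM and ll=ltM and h=dec and Y=Y and E=E, OF cous_MU injY decMU EQ E0 dE])
  have Y'Y: "Y' \<subseteq> Y" unfolding Y_def Y'_def by auto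
  have dE': "\<forall>x\<in>Y'. \<forall>y\<in>Y'. dY x y \<in> E" using dE Y'Y unfolding dY_def by blast
  have fd: "d (f i) (f j) = dY i j" if "i \<in> Y'" "j \<in> Y'" for i j
    using gd[OF fR[OF that(1)] fR[OF that(2)]] unfolding dY_def by simp
  have fX: "\<And>i. i \<in> Y' \<Longrightarrow> f i \<in> X" using fR RX by blast
  have dc: "dc_emb Y' dY E ltY X d Qnn lt f id"
    unfolding dc_emb_def
  proof (intro conjI ballI impI)
    show "inj_on f Y'"
    proof (rule inj_onI)
      fix i j assume ij: "i \<in> Y'" "j \<in> Y'" "f i = f j"
      hence "dY i j = 0" using fd[OF ij(1,2)] dX_self[OF fX[OF ij(1)]] by simp
      hence "dec i = dec j" unfolding dY_def using dM_eq0 decY' DomMU ij by blast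
      thus "i = j" using inj_onD[OF injY] ij Y'Y by blast
    qed
    show "f ` Y' \<subseteq> X" using fX by blast
    show "id ` E \<subseteq> Qnn" using EQ by simp
    show "strict_mono_on E id" by (simp add: strict_mono_on_def)
    show "id 0 = 0" by simp
    fix x y assume xy: "x \<in> Y'" "y \<in> Y'"
    show "d (f x) (f y) = id (dY x y)" using fd[OF xy] by simp
    assume "ltY x y"
    thus "lt (f x) (f y)" using gd[OF fR[OF xy(1)] fR[OF xy(2)]] unfolding ltY_def by blast
  qed
  note ext = extX[unfolded extension_property_def, THEN spec[of _ Y], THEN spec[of _ dY], THEN spec[of _ E],
     THEN spec[of _ ltY], THEN spec[of _ Y'], THEN spec[of _ E], THEN spec[of _ f], THEN spec[of _ id], THEN mp]
  have pre: "finite Y \<and> finite E \<and> cous Y dY E ltY \<and> Y' \<subseteq> Y \<and> E \<subseteq> E \<and> 0 \<in> E \<and>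
      (\<forall>x\<in>Y'. \<forall>y\<in>Y'. dY x y \<in> E) \<and> dc_emb Y' dY E ltY X d Qnn lt f id"
    using finY finE cY Y'Y E0 dE' dc by simp
  have "\<exists>g Dg. dc_emb Y dY E ltY X d Qnn lt g Dg \<and> (\<forall>y\<in>Y'. g y = f y) \<and> (\<forall>e\<in>E. Dg e = id e)"
    by (rule ext[OF pre])
  then obtain gg Dg where dcg: "dc_emb Y dY E ltY X d Qnn lt gg Dg" and gf: "\<forall>y\<in>Y'. gg y = f y"
    and Dgid: "\<forall>e\<in>E. Dg e = id e" by blast
  have mY: "enc m \<in> Y" unfolding Y_def by simp
  have gX: "gg (enc m) \<in> X" using dcg mY unfolding dc_emb_def by blast
  have gdist: "\<And>i j. i \<in> Y \<Longrightarrow> j \<in> Y \<Longrightarrow> d (gg i) (gg j) = Dg (dY i j)"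
    using dcg unfolding dc_emb_def by blast
  have gord: "\<And>i j. i \<in> Y \<Longrightarrow> j \<in> Y \<Longrightarrow> ltY i j \<Longrightarrow> lt (gg i) (gg j)"
    using dcg unfolding dc_emb_def by blast
  have "good (insert (m, gg (enc m)) R)"
  proof (rule good_insert_self[OF g m gX])
    fix a y assume ay: "(a, y) \<in> R"
    have aY: "enc a \<in> Y" "enc a \<in> Y'" unfolding Y_def Y'_def using ay by auto
    have ga: "gg (enc a) = y" using gf aY fenc[OF ay] by simp
    have a: "a \<in> MU" using RX[OF ay] by simp
    have "dY (enc m) (enc a) \<in> E" unfolding E_def using mY aY by blast
    hence "d (gg (enc m)) y = dM m a" using gdist[OF mY aY(1)] ga Dgid unfolding dY_def
      using de[OF m] de[OF a] by simp
    moreover have "ltM m a \<longrightarrow> lt (gg (enc m)) y"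
      using gord[OF mY aY(1)] ga unfolding ltY_def using de[OF m] de[OF a] by simp
    moreover have "ltM a m \<longrightarrow> lt y (gg (enc m))"
      using gord[OF aY(1) mY] ga unfolding ltY_def using de[OF m] de[OF a] by simp
    ultimately show "dM m a = d (gg (enc m)) y \<and> (ltM m a \<longrightarrow> lt (gg (enc m)) y) \<and> (ltM a m \<longrightarrow> lt y (gg (enc m)))"
      by simp
  qed
  thus ?thesis by blast
qed


definition stepF :: "((rat \<Rightarrow> rat) \<times> 'a) set \<Rightarrow> (rat \<Rightarrow> rat) \<Rightarrow> ((rat \<Rightarrow> rat) \<times> 'a) set" where
  "stepF R m = (SOME R'. good R' \<and> R \<subseteq> R' \<and> m \<in> Domain R')"
definition stepB :: "((rat \<Rightarrow> rat) \<times> 'a) set \<Rightarrow> 'a \<Rightarrow> ((rat \<Rightarrow> rat) \<times> 'a) set" where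
  "stepB R x = (SOME R'. good R' \<and> R \<subseteq> R' \<and> (x \<in> X \<longrightarrow> x \<in> Range R'))"

primrec chainR :: "nat \<Rightarrow> ((rat \<Rightarrow> rat) \<times> 'a) set" where
  "chainR 0 = {}"
| "chainR (Suc n) = stepB (stepF (chainR n) (from_nat_into MU n)) (from_nat_into X n)"

lemma stepF_props:
  assumes "good R" "m \<in> MU"
  shows "good (stepF R m) \<and> R \<subseteq> stepF R m \<and> m \<in> Domain (stepF R m)"
proof -
  obtain x where "good (insert (m, x) R)" using forth_step[OF assms] by blast
  hence "\<exists>R'. good R' \<and> R \<subseteq> R' \<and> m \<in> Domain R'" by blast
  thus ?thesis unfolding stepF_def by (rule someI_ex)
qed

lemma stepB_props:
  assumes "good R"
  shows "good (stepB R x) \<and> R \<subseteq> stepB R x \<and> (x \<in> X \<longrightarrow> x \<in> Range (stepB R x))"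
proof -
  have "\<exists>R'. good R' \<and> R \<subseteq> R' \<and> (x \<in> X \<longrightarrow> x \<in> Range R')"
  proof (cases "x \<in> X")
    case True
    obtain m where "good (insert (m, x) R)" using back_step[OF assms True] by blast
    thus ?thesis by blast
  next
    case False thus ?thesis using assms by blast
  qed
  thus ?thesis unfolding stepB_def by (rule someI_ex)
qed

lemma MU_ne: "MU \<noteq> {}" using zero_MU by blast

lemma nat_MU: "from_nat_into MU n \<in> MU" using from_nat_into[OF MU_ne] by blast

lemma good_empty: "good {}" unfolding good_def by simp

lemma chain_good: "good (chainR n)"
proof (induction n)
  case 0 show ?case using good_empty by simp
next
  case (Suc n)
  have "good (stepF (chainR n) (from_nat_into MU n))" using stepF_props[OF Suc nat_MU] by blast
  thus ?case using stepB_props by simp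
qed

lemma chain_Suc: "chainR n \<subseteq> chainR (Suc n)"
proof -
  have "chainR n \<subseteq> stepF (chainR n) (from_nat_into MU n)" using stepF_props[OF chain_good nat_MU] by blast
  also have "\<dots> \<subseteq> chainR (Suc n)"
    using stepB_props[OF conjunct1[OF stepF_props[OF chain_good nat_MU]]] by simp
  finally show ?thesis .
qed

lemma chain_mono: "n \<le> k \<Longrightarrow> chainR n \<subseteq> chainR k"
  using lift_Suc_mono_le[of chainR, OF chain_Suc] by blast

definition GG where "GG = (\<Union>n. chainR n)"

lemma GG_pair:
  assumes "(a, x) \<in> GG" "(b, y) \<in> GG"
  shows "dM a b = d x y \<and> (ltM a b \<longrightarrow> lt x y)"
proof -
  obtain n k where "(a, x) \<in> chainR n" "(b, y) \<in> chainR k" using assms unfolding GG_def by auto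
  hence "(a, x) \<in> chainR (max n k)" "(b, y) \<in> chainR (max n k)" using chain_mono[of n "max n k"] chain_mono[of k "max n k"] by auto
  thus ?thesis using chain_good[of "max n k"] unfolding good_def by blast
qed

lemma GG_sub: "(a, x) \<in> GG \<Longrightarrow> a \<in> MU \<and> x \<in> X"
  using chain_good unfolding GG_def good_def by blast

lemma GG_dom: assumes "a \<in> MU" shows "\<exists>x. (a, x) \<in> GG"
proof -
  obtain n where n: "from_nat_into MU n = a" using from_nat_into_surj[OF countable_MU assms] by blast
  have "a \<in> Domain (stepF (chainR n) a)" using stepF_props[OF chain_good assms] by blast
  moreover have "stepF (chainR n) a \<subseteq> chainR (Suc n)"
    using stepB_props[OF conjunct1[OF stepF_props[OF chain_good assms]]] n by simp
  ultimately show ?thesis unfolding GG_def by blast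
qed

lemma GG_ran: assumes "x \<in> X" shows "\<exists>a. (a, x) \<in> GG"
proof -
  obtain n where n: "from_nat_into X n = x" using from_nat_into_surj[OF countX assms] by blast
  have "x \<in> Range (chainR (Suc n))"
    using stepB_props[OF conjunct1[OF stepF_props[OF chain_good[of n] nat_MU[of n]]], of x] assms n by simp
  thus ?thesis unfolding GG_def by blast
qed

lemma iso_exists:
  "\<exists>\<Phi>. bij_betw \<Phi> MU X \<and> (\<forall>a\<in>MU. \<forall>b\<in>MU. d (\<Phi> a) (\<Phi> b) = dM a b \<and> (ltM a b \<longleftrightarrow> lt (\<Phi> a) (\<Phi> b)))"
proof -
  define \<Phi> where "\<Phi> = (\<lambda>a. SOME x. (a, x) \<in> GG)"
  have PG: "\<And>a. a \<in> MU \<Longrightarrow> (a, \<Phi> a) \<in> GG" unfolding \<Phi>_def using GG_dom by (metis someI_ex)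
  have PX: "\<And>a. a \<in> MU \<Longrightarrow> \<Phi> a \<in> X" using PG GG_sub by blast
  have dist: "\<And>a b. a \<in> MU \<Longrightarrow> b \<in> MU \<Longrightarrow> d (\<Phi> a) (\<Phi> b) = dM a b"
    using GG_pair PG by metis
  have ord: "\<And>a b. a \<in> MU \<Longrightarrow> b \<in> MU \<Longrightarrow> ltM a b \<Longrightarrow> lt (\<Phi> a) (\<Phi> b)"
    using GG_pair PG by metis
  have inj: "inj_on \<Phi> MU"
  proof (rule inj_onI)
    fix a b assume ab: "a \<in> MU" "b \<in> MU" "\<Phi> a = \<Phi> b"
    hence "dM a b = 0" using dist[OF ab(1,2)] dX_self[OF PX[OF ab(1)]] by simp
    thus "a = b" using dM_eq0 ab by blast
  qed
  have surj: "\<Phi> ` MU = X"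
  proof
    show "\<Phi> ` MU \<subseteq> X" using PX by blast
    show "X \<subseteq> \<Phi> ` MU"
    proof
      fix x assume x: "x \<in> X"
      obtain a where ax: "(a, x) \<in> GG" using GG_ran[OF x] by blast
      have a: "a \<in> MU" using GG_sub[OF ax] by blast
      have "d x (\<Phi> a) = dM a a" using GG_pair[OF ax PG[OF a]] by simp
      hence "x = \<Phi> a" using dX_eq0[OF x PX[OF a]] by simp
      thus "x \<in> \<Phi> ` MU" using a by blast
    qed
  qed
  have ord2: "lt (\<Phi> a) (\<Phi> b) \<Longrightarrow> ltM a b" if ab: "a \<in> MU" "b \<in> MU" for a b
  proof -
    assume l: "lt (\<Phi> a) (\<Phi> b)"
    have "a \<noteq> b" using l lt_irrefl PX ab by blast
    moreover have "\<not> ltM b a" using ord[OF ab(2,1)] lt_asym[OF PX[OF ab(1)] PX[OF ab(2)] l] by blast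
    ultimately show "ltM a b" using ltM_total ab by blast
  qed
  show ?thesis
    by (rule exI[of _ \<Phi>]) (use inj surj dist ord ord2 in \<open>auto simp: bij_betw_def\<close>)
qed

end


definition perm_on :: "'b set \<Rightarrow> ('b \<Rightarrow> 'b) \<Rightarrow> bool" where
  "perm_on S f \<longleftrightarrow> f \<in> extensional S \<and> bij_betw f S S"

lemma perm_onD: "perm_on S f \<Longrightarrow> x \<in> S \<Longrightarrow> f x \<in> S"
  unfolding perm_on_def bij_betw_def by auto

lemma perm_on_compose: assumes "perm_on S f" "perm_on S g" shows "perm_on S (compose S f g)"
proof -
  have b: "bij_betw (f \<circ> g) S S" using assms unfolding perm_on_def using bij_betw_trans by blast
  have "bij_betw (compose S f g) S S" by (rule bij_betw_cong[THEN iffD1, OF _ b]) (simp add: compose_eq)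
  thus ?thesis unfolding perm_on_def compose_def by simp
qed

definition pinv :: "'b set \<Rightarrow> ('b \<Rightarrow> 'b) \<Rightarrow> ('b \<Rightarrow> 'b)" where
  "pinv S f = restrict (inv_into S f) S"

lemma perm_on_pinv: assumes "perm_on S f" shows "perm_on S (pinv S f)"
proof -
  have b: "bij_betw (inv_into S f) S S" using assms unfolding perm_on_def using bij_betw_inv_into by blast
  have "bij_betw (pinv S f) S S" by (rule bij_betw_cong[THEN iffD1, OF _ b]) (simp add: pinv_def)
  thus ?thesis unfolding perm_on_def pinv_def by simp
qed

lemma pinv_apply1: assumes "perm_on S f" "x \<in> S" shows "pinv S f (f x) = x"
proof -
  have "f x \<in> S" by (rule perm_onD[OF assms])
  moreover have "inj_on f S" using assms(1) unfolding perm_on_def bij_betw_def by simp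
  ultimately show ?thesis unfolding pinv_def using assms(2) by (simp add: inv_into_f_f)
qed

lemma pinv_apply2: assumes "perm_on S f" "x \<in> S" shows "f (pinv S f x) = x"
proof -
  have "f ` S = S" using assms(1) unfolding perm_on_def bij_betw_def by simp
  thus ?thesis unfolding pinv_def using assms(2) by (simp add: f_inv_into_f)
qed

lemma perm_on_ext: "perm_on S f \<Longrightarrow> perm_on S g \<Longrightarrow> (\<And>x. x \<in> S \<Longrightarrow> f x = g x) \<Longrightarrow> f = g"
  unfolding perm_on_def by (intro extensionalityI[of f S g]) auto

lemma compose_pinv_l: "perm_on S f \<Longrightarrow> compose S (pinv S f) f = restrict id S"
  unfolding compose_def by (rule restrict_ext) (simp add: pinv_apply1)

lemma compose_pinv_r: "perm_on S f \<Longrightarrow> compose S f (pinv S f) = restrict id S"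
  unfolding compose_def by (rule restrict_ext) (simp add: pinv_apply2)

lemma perm_on_id: "perm_on S (restrict id S)"
  unfolding perm_on_def by (simp add: bij_betw_def inj_on_def)

lemma compose_id_l: assumes "perm_on S f" shows "compose S (restrict id S) f = f"
proof (rule perm_on_ext[OF perm_on_compose[OF perm_on_id assms] assms])
  fix x assume "x \<in> S"
  thus "compose S (restrict id S) f x = f x" using perm_onD[OF assms] by (simp add: compose_eq)
qed

lemma compose_id_r: assumes "perm_on S f" shows "compose S f (restrict id S) = f"
proof (rule perm_on_ext[OF perm_on_compose[OF assms perm_on_id] assms])
  fix x assume "x \<in> S"
  thus "compose S f (restrict id S) x = f x" by (simp add: compose_eq)
qed

lemma compose_assoc': "perm_on S f \<Longrightarrow> perm_on S g \<Longrightarrow> perm_on S h \<Longrightarrow>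
   compose S (compose S f g) h = compose S f (compose S g h)"
  unfolding compose_def by (rule restrict_ext) (simp add: perm_onD)

lemma pinv_mono:
  fixes f :: "rat \<Rightarrow> rat"
  assumes "perm_on S f" "strict_mono_on S f"
  shows "strict_mono_on S (pinv S f)"
proof (rule strict_mono_onI)
  fix x y assume xy: "x \<in> S" "y \<in> S" "x < y"
  have i: "pinv S f x \<in> S" "pinv S f y \<in> S"
    using perm_onD[OF perm_on_pinv[OF assms(1)] xy(1)] perm_onD[OF perm_on_pinv[OF assms(1)] xy(2)] by auto
  show "pinv S f x < pinv S f y"
  proof (rule ccontr)
    assume "\<not> pinv S f x < pinv S f y"
    hence "pinv S f y \<le> pinv S f x" by simp
    hence "f (pinv S f y) \<le> f (pinv S f x)"
    proof (cases "pinv S f y = pinv S f x")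
      case False
      hence "pinv S f y < pinv S f x" using \<open>pinv S f y \<le> pinv S f x\<close> by simp
      from strict_mono_onD[OF assms(2) i(2) i(1) this] show ?thesis by simp
    qed simp
    thus False using pinv_apply2[OF assms(1)] xy by simp
  qed
qed

lemma compose_mono:
  fixes f g :: "rat \<Rightarrow> rat"
  assumes "perm_on S g" "strict_mono_on S f" "strict_mono_on S g"
  shows "strict_mono_on S (compose S f g)"
proof (rule strict_mono_onI)
  fix x y assume xy: "x \<in> S" "y \<in> S" "x < y"
  have "g x < g y" by (rule strict_mono_onD[OF assms(3) xy])
  moreover have "g x \<in> S" "g y \<in> S" using perm_onD[OF assms(1)] xy by auto
  ultimately have "f (g x) < f (g y)" using strict_mono_onD[OF assms(2)] by blast
  thus "compose S f g x < compose S f g y" using xy by (simp add: compose_eq)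
qed

section \<open>Topology of pointwise convergence\<close>

abbreviation PT :: "'b set \<Rightarrow> ('b \<Rightarrow> 'b) topology" where
  "PT S \<equiv> product_topology (\<lambda>_. discrete_topology S) S"

lemma topspace_PT: "topspace (PT S) = S \<rightarrow>\<^sub>E S" by simp

lemma perm_on_PT: "perm_on S f \<Longrightarrow> f \<in> topspace (PT S)"
  using perm_onD[of S f] unfolding perm_on_def by (simp add: PiE_def Pi_def)

lemma lc_eval:
  assumes c: "continuous_map T (PT S) \<phi>" and a: "a \<in> S"
  shows "openin T {t \<in> topspace T. \<phi> t a = b}"
proof -
  have c2: "continuous_map T (discrete_topology S) ((\<lambda>x. x a) \<circ> \<phi>)"
    by (rule continuous_map_compose[OF c continuous_map_product_projection[OF a]])
  show ?thesis
  proof (cases "b \<in> S")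
    case True
    have "openin T {t \<in> topspace T. ((\<lambda>x. x a) \<circ> \<phi>) t \<in> {b}}"
      by (rule openin_continuous_map_preimage[OF c2]) (simp add: True)
    thus ?thesis by simp
  next
    case False
    have "\<And>t. t \<in> topspace T \<Longrightarrow> \<phi> t a \<in> S"
      using continuous_map_image_subset_topspace[OF c2] by auto
    hence "{t \<in> topspace T. \<phi> t a = b} = {}" using False by auto
    thus ?thesis by (simp only: openin_empty)
  qed
qed

lemma cont_PT:
  assumes r: "\<And>t. t \<in> topspace T \<Longrightarrow> \<phi> t \<in> S \<rightarrow>\<^sub>E S"
    and o: "\<And>a b. a \<in> S \<Longrightarrow> openin T {t \<in> topspace T. \<phi> t a = b}"
  shows "continuous_map T (PT S) \<phi>"
  unfolding continuous_map_componentwise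
proof (intro conjI ballI)
  show "\<phi> ` topspace T \<subseteq> extensional S" using r by (auto simp: PiE_def)
  fix k assume k: "k \<in> S"
  show "continuous_map T (discrete_topology S) (\<lambda>x. \<phi> x k)"
    unfolding continuous_map_def
  proof (intro conjI allI impI)
    show "(\<lambda>x. \<phi> x k) \<in> topspace T \<rightarrow> topspace (discrete_topology S)" using r k by auto
    fix U assume "openin (discrete_topology S) U"
    have "{x \<in> topspace T. \<phi> x k \<in> U} = (\<Union>b\<in>U. {t \<in> topspace T. \<phi> t k = b})" by auto
    moreover have "openin T (\<Union>b\<in>U. {t \<in> topspace T. \<phi> t k = b})"
      using o[OF k] by (intro openin_Union) auto
    ultimately show "openin T {x \<in> topspace T. \<phi> x k \<in> U}" by simp
  qed
qed

lemma open_agree: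
  assumes "finite F" "\<And>c. c \<in> F \<Longrightarrow> openin T {t \<in> topspace T. \<psi> t c = g c}"
  shows "openin T {t \<in> topspace T. \<forall>c\<in>F. \<psi> t c = g c}"
  using assms
proof (induction F rule: finite_induct)
  case empty thus ?case by simp
next
  case (insert c F)
  have "{t \<in> topspace T. \<forall>c'\<in>insert c F. \<psi> t c' = g c'} =
     {t \<in> topspace T. \<psi> t c = g c} \<inter> {t \<in> topspace T. \<forall>c\<in>F. \<psi> t c = g c}" by auto
  moreover have "openin T {t \<in> topspace T. \<psi> t c = g c}" using insert.prems by simp
  moreover have "openin T {t \<in> topspace T. \<forall>c\<in>F. \<psi> t c = g c}" using insert.IH insert.prems by simp
  ultimately show ?case by (simp only: openin_Int)
qed

lemma lc_comp:
  assumes o1: "\<And>c b. c \<in> S \<Longrightarrow> openin T {t \<in> topspace T. P t c = b}"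
    and o2: "\<And>c. openin T {t \<in> topspace T. Q t = c}"
    and r: "\<And>t. t \<in> topspace T \<Longrightarrow> Q t \<in> S"
  shows "openin T {t \<in> topspace T. P t (Q t) = b}"
proof -
  have "{t \<in> topspace T. P t (Q t) = b} =
      (\<Union>c\<in>S. {t \<in> topspace T. Q t = c} \<inter> {t \<in> topspace T. P t c = b})"
    using r by auto
  moreover have "openin T (\<Union>c\<in>S. {t \<in> topspace T. Q t = c} \<inter> {t \<in> topspace T. P t c = b})"
    using o1 o2 by (intro openin_Union) (auto intro!: openin_Int)
  ultimately show ?thesis by simp
qed


lemma cont_compose_PT:
  assumes c1: "continuous_map T (PT S) \<phi>1" and c2: "continuous_map T (PT S) \<phi>2"
    and p: "\<And>t. t \<in> topspace T \<Longrightarrow> perm_on S (\<phi>1 t) \<and> perm_on S (\<phi>2 t)"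
  shows "continuous_map T (PT S) (\<lambda>t. compose S (\<phi>1 t) (\<phi>2 t))"
proof (rule cont_PT)
  fix t assume "t \<in> topspace T"
  hence "perm_on S (compose S (\<phi>1 t) (\<phi>2 t))" using p[of t] perm_on_compose[of S "\<phi>1 t" "\<phi>2 t"] by simp
  thus "compose S (\<phi>1 t) (\<phi>2 t) \<in> S \<rightarrow>\<^sub>E S" using perm_on_PT[of S] by simp
next
  fix a b assume a: "a \<in> S"
  have "openin T {t \<in> topspace T. \<phi>1 t (\<phi>2 t a) = b}"
  proof (rule lc_comp[where S = S and P = \<phi>1 and Q = "\<lambda>t. \<phi>2 t a"])
    show "\<And>c b. c \<in> S \<Longrightarrow> openin T {t \<in> topspace T. \<phi>1 t c = b}" using lc_eval[OF c1] by blast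
    show "\<And>c. openin T {t \<in> topspace T. \<phi>2 t a = c}" using lc_eval[OF c2 a] by blast
    show "\<And>t. t \<in> topspace T \<Longrightarrow> \<phi>2 t a \<in> S" using p a perm_onD[of S] by simp
  qed
  moreover have "{t \<in> topspace T. compose S (\<phi>1 t) (\<phi>2 t) a = b} = {t \<in> topspace T. \<phi>1 t (\<phi>2 t a) = b}"
    using a by (simp add: compose_eq)
  ultimately show "openin T {t \<in> topspace T. compose S (\<phi>1 t) (\<phi>2 t) a = b}" by simp
qed

lemma cont_pinv_PT:
  assumes c: "continuous_map T (PT S) \<phi>"
    and p: "\<And>t. t \<in> topspace T \<Longrightarrow> perm_on S (\<phi> t)"
  shows "continuous_map T (PT S) (\<lambda>t. pinv S (\<phi> t))"
proof (rule cont_PT)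
  fix t assume "t \<in> topspace T"
  hence "perm_on S (pinv S (\<phi> t))" using p[of t] perm_on_pinv[of S "\<phi> t"] by simp
  thus "pinv S (\<phi> t) \<in> S \<rightarrow>\<^sub>E S" using perm_on_PT[of S] by simp
next
  fix a b assume a: "a \<in> S"
  show "openin T {t \<in> topspace T. pinv S (\<phi> t) a = b}"
  proof (cases "b \<in> S")
    case True
    have "{t \<in> topspace T. pinv S (\<phi> t) a = b} = {t \<in> topspace T. \<phi> t b = a}"
    proof (intro Collect_cong conj_cong refl iffI)
      fix t assume t: "t \<in> topspace T"
      { assume "pinv S (\<phi> t) a = b" thus "\<phi> t b = a" using pinv_apply2[OF p[OF t] a] by simp }
      { assume "\<phi> t b = a" thus "pinv S (\<phi> t) a = b" using pinv_apply1[OF p[OF t] True] by simp }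
    qed
    thus ?thesis using lc_eval[OF c True] by simp
  next
    case False
    have "\<And>t. t \<in> topspace T \<Longrightarrow> pinv S (\<phi> t) a \<in> S" using p perm_on_pinv[of S] perm_onD[of S _ a] a by simp
    hence "{t \<in> topspace T. pinv S (\<phi> t) a = b} = {}" using False by auto
    thus ?thesis by (simp only: openin_empty)
  qed
qed

section \<open>The group Aut(Q>=0)\<close>

lemma AQ_iff: "h \<in> carrier AutQ \<longleftrightarrow> perm_on Qnn h \<and> strict_mono_on Qnn h"
  unfolding AutQ_def perm_on_def by simp

lemma AQ_mult: "x \<otimes>\<^bsub>AutQ\<^esub> y = compose Qnn x y" by (simp add: AutQ_def)
lemma AQ_one: "\<one>\<^bsub>AutQ\<^esub> = restrict id Qnn" by (simp add: AutQ_def)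

lemma id_mono: "strict_mono_on S (restrict id S :: rat \<Rightarrow> rat)"
  by (simp add: strict_mono_on_def)

lemma group_AutQ: "group AutQ"
proof (rule groupI)
  show "\<And>x y. x \<in> carrier AutQ \<Longrightarrow> y \<in> carrier AutQ \<Longrightarrow> x \<otimes>\<^bsub>AutQ\<^esub> y \<in> carrier AutQ"
    unfolding AQ_iff AQ_mult using perm_on_compose[of Qnn] compose_mono[of Qnn] by simp
  show "\<one>\<^bsub>AutQ\<^esub> \<in> carrier AutQ" unfolding AQ_iff AQ_one using perm_on_id[of Qnn] id_mono[of Qnn] by simp
  show "\<And>x y z. x \<in> carrier AutQ \<Longrightarrow> y \<in> carrier AutQ \<Longrightarrow> z \<in> carrier AutQ \<Longrightarrow>
      x \<otimes>\<^bsub>AutQ\<^esub> y \<otimes>\<^bsub>AutQ\<^esub> z = x \<otimes>\<^bsub>AutQ\<^esub> (y \<otimes>\<^bsub>AutQ\<^esub> z)"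
    unfolding AQ_iff AQ_mult using compose_assoc'[of Qnn] by simp
  show "\<And>x. x \<in> carrier AutQ \<Longrightarrow> \<one>\<^bsub>AutQ\<^esub> \<otimes>\<^bsub>AutQ\<^esub> x = x"
    unfolding AQ_iff AQ_mult AQ_one using compose_id_l[of Qnn] by simp
  fix x assume x: "x \<in> carrier AutQ"
  have "pinv Qnn x \<in> carrier AutQ" "pinv Qnn x \<otimes>\<^bsub>AutQ\<^esub> x = \<one>\<^bsub>AutQ\<^esub>"
    using x unfolding AQ_iff AQ_mult AQ_one using perm_on_pinv[of Qnn x] pinv_mono[of Qnn x] compose_pinv_l[of Qnn x] by simp_all
  thus "\<exists>y\<in>carrier AutQ. y \<otimes>\<^bsub>AutQ\<^esub> x = \<one>\<^bsub>AutQ\<^esub>" by blast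
qed

lemma AQ_inv: assumes "h \<in> carrier AutQ" shows "inv\<^bsub>AutQ\<^esub> h = pinv Qnn h"
proof (rule group.inv_equality[OF group_AutQ])
  show "pinv Qnn h \<otimes>\<^bsub>AutQ\<^esub> h = \<one>\<^bsub>AutQ\<^esub>" using assms unfolding AQ_iff AQ_mult AQ_one
    using compose_pinv_l[of Qnn h] by simp
  show "h \<in> carrier AutQ" by fact
  show "pinv Qnn h \<in> carrier AutQ" using assms unfolding AQ_iff using perm_on_pinv[of Qnn h] pinv_mono[of Qnn h] by simp
qed

lemma AQ_zero: assumes "h \<in> carrier AutQ" shows "h 0 = 0"
proof -
  have p: "perm_on Qnn h" and m: "strict_mono_on Qnn h" using assms AQ_iff by auto
  have z: "(0::rat) \<in> Qnn" by (simp add: Qnn_def)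
  define x0 where "x0 = pinv Qnn h 0"
  have x0: "x0 \<in> Qnn" "h x0 = 0" unfolding x0_def using perm_onD[OF perm_on_pinv[OF p] z] pinv_apply2[OF p z] by auto
  have "h 0 \<in> Qnn" using perm_onD[OF p z] .
  show ?thesis
  proof (cases "x0 = 0")
    case True thus ?thesis using x0 by simp
  next
    case False
    hence "0 < x0" using x0 by (simp add: Qnn_def)
    hence "h 0 < h x0" using strict_mono_onD[OF m z x0(1)] by simp
    thus ?thesis using x0 \<open>h 0 \<in> Qnn\<close> by (simp add: Qnn_def)
  qed
qed

lemma topspace_AQT: "topspace AutQ_top = carrier AutQ"
  unfolding AutQ_top_def topspace_subtopology using perm_on_PT[of Qnn] AQ_iff by blast

lemma AQT_PT: "continuous_map AutQ_top (PT Qnn) id"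
  unfolding AutQ_top_def by (rule continuous_map_from_subtopology[OF continuous_map_id])

lemma AQT_PT': "continuous_map AutQ_top (PT Qnn) (\<lambda>x. x)"
  using AQT_PT by (simp add: id_def)

lemma into_AQT: "continuous_map T (PT Qnn) f \<Longrightarrow> f \<in> topspace T \<rightarrow> carrier AutQ \<Longrightarrow> continuous_map T AutQ_top f"
  unfolding AutQ_top_def continuous_map_in_subtopology by simp

lemma topgroup_AutQ: "topological_group AutQ AutQ_top"
  unfolding topological_group_def
proof (intro conjI)
  show "group AutQ" by (rule group_AutQ)
  show "topspace AutQ_top = carrier AutQ" by (rule topspace_AQT)
  have cf: "continuous_map (prod_topology AutQ_top AutQ_top) (PT Qnn) fst"
    using continuous_map_compose[OF continuous_map_fst AQT_PT] by (simp add: o_def id_def)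
  have cs: "continuous_map (prod_topology AutQ_top AutQ_top) (PT Qnn) snd"
    using continuous_map_compose[OF continuous_map_snd AQT_PT] by (simp add: o_def id_def)
  have "continuous_map (prod_topology AutQ_top AutQ_top) (PT Qnn) (\<lambda>t. compose Qnn (fst t) (snd t))"
    by (rule cont_compose_PT[OF cf cs]) (auto simp: topspace_AQT AQ_iff)
  moreover have "(\<lambda>t. compose Qnn (fst t) (snd t)) \<in> topspace (prod_topology AutQ_top AutQ_top) \<rightarrow> carrier AutQ"
    using perm_on_compose[of Qnn] compose_mono[of Qnn] by (auto simp: topspace_AQT AQ_iff)
  ultimately have "continuous_map (prod_topology AutQ_top AutQ_top) AutQ_top (\<lambda>t. compose Qnn (fst t) (snd t))"
    by (rule into_AQT)
  moreover have "(\<lambda>(x, y). x \<otimes>\<^bsub>AutQ\<^esub> y) = (\<lambda>t. compose Qnn (fst t) (snd t))"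
    by (auto simp: AQ_mult)
  ultimately show "continuous_map (prod_topology AutQ_top AutQ_top) AutQ_top (\<lambda>(x, y). x \<otimes>\<^bsub>AutQ\<^esub> y)" by simp
  have "continuous_map AutQ_top (PT Qnn) (\<lambda>t. pinv Qnn t)"
    by (rule cont_pinv_PT[OF AQT_PT']) (auto simp: topspace_AQT AQ_iff)
  moreover have "(\<lambda>t. pinv Qnn t) \<in> topspace AutQ_top \<rightarrow> carrier AutQ"
    using perm_on_pinv[of Qnn] pinv_mono[of Qnn] by (auto simp: topspace_AQT AQ_iff)
  ultimately have "continuous_map AutQ_top AutQ_top (\<lambda>t. pinv Qnn t)"
    by (rule into_AQT)
  thus "continuous_map AutQ_top AutQ_top (\<lambda>x. inv\<^bsub>AutQ\<^esub> x)"
    by (rule continuous_map_eq) (simp add: topspace_AQT AQ_inv)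
qed



lemma pinv_id: "pinv S (restrict id S) = restrict id S"
proof (rule perm_on_ext[OF perm_on_pinv[OF perm_on_id] perm_on_id])
  fix x assume x: "x \<in> S"
  have "pinv S (restrict id S) (restrict id S x) = x" by (rule pinv_apply1[OF perm_on_id x])
  thus "pinv S (restrict id S) x = restrict id S x" using x by simp
qed

context FL begin

abbreviation "CC \<equiv> AutU_carrier X d lt"
abbreviation "AU \<equiv> AutU X d lt"
abbreviation "TU \<equiv> AutU_top X d lt"

lemma CC_iff: "p \<in> CC \<longleftrightarrow> perm_on X (fst p) \<and> snd p \<in> carrier AutQ \<and>
   (\<forall>x\<in>X. \<forall>y\<in>X. d (fst p x) (fst p y) = snd p (d x y)) \<and>
   (\<forall>x\<in>X. \<forall>y\<in>X. lt x y \<longrightarrow> lt (fst p x) (fst p y))"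
proof (cases p)
  case (Pair f g)
  have "g \<in> carrier AutQ \<Longrightarrow> g 0 = 0" by (rule AQ_zero)
  thus ?thesis unfolding Pair AutU_carrier_def perm_on_def AQ_iff[unfolded perm_on_def] by auto
qed

lemma AU_mult: "p \<otimes>\<^bsub>AU\<^esub> q = (compose X (fst p) (fst q), compose Qnn (snd p) (snd q))"
  by (simp add: AutU_def)
lemma AU_one: "\<one>\<^bsub>AU\<^esub> = (restrict id X, restrict id Qnn)"
  by (simp add: AutU_def)
lemma AU_carrier: "carrier AU = CC" by (simp add: AutU_def)

lemma Qnn_d: "x \<in> X \<Longrightarrow> y \<in> X \<Longrightarrow> d x y \<in> Qnn" using dX_nonneg by (simp add: Qnn_def)

lemma CC_mult:
  assumes p: "p \<in> CC" and q: "q \<in> CC"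
  shows "(compose X (fst p) (fst q), compose Qnn (snd p) (snd q)) \<in> CC"
proof -
  have pp: "perm_on X (fst p)" "snd p \<in> carrier AutQ"
    and pd: "\<And>x y. x \<in> X \<Longrightarrow> y \<in> X \<Longrightarrow> d (fst p x) (fst p y) = snd p (d x y)"
    and po: "\<And>x y. x \<in> X \<Longrightarrow> y \<in> X \<Longrightarrow> lt x y \<Longrightarrow> lt (fst p x) (fst p y)"
    using p unfolding CC_iff by blast+
  have qq: "perm_on X (fst q)" "snd q \<in> carrier AutQ"
    and qd: "\<And>x y. x \<in> X \<Longrightarrow> y \<in> X \<Longrightarrow> d (fst q x) (fst q y) = snd q (d x y)"
    and qo: "\<And>x y. x \<in> X \<Longrightarrow> y \<in> X \<Longrightarrow> lt x y \<Longrightarrow> lt (fst q x) (fst q y)"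
    using q unfolding CC_iff by blast+
  have 1: "perm_on X (compose X (fst p) (fst q))" by (rule perm_on_compose[OF pp(1) qq(1)])
  have 2: "compose Qnn (snd p) (snd q) \<in> carrier AutQ"
    using pp(2) qq(2) unfolding AQ_iff using perm_on_compose[of Qnn] compose_mono[of Qnn] by simp
  have 3: "d (compose X (fst p) (fst q) x) (compose X (fst p) (fst q) y) = compose Qnn (snd p) (snd q) (d x y)"
    if xy: "x \<in> X" "y \<in> X" for x y
  proof -
    have "fst q x \<in> X" "fst q y \<in> X" using perm_onD[OF qq(1)] xy by auto
    hence "d (fst p (fst q x)) (fst p (fst q y)) = snd p (snd q (d x y))" using pd qd xy by simp
    thus ?thesis using xy Qnn_d[OF xy] by (simp add: compose_eq)
  qed
  have 4: "lt (compose X (fst p) (fst q) x) (compose X (fst p) (fst q) y)"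
    if xy: "x \<in> X" "y \<in> X" "lt x y" for x y
  proof -
    have "fst q x \<in> X" "fst q y \<in> X" using perm_onD[OF qq(1)] xy by auto
    hence "lt (fst p (fst q x)) (fst p (fst q y))" using po qo xy by simp
    thus ?thesis using xy by (simp add: compose_eq)
  qed
  show ?thesis unfolding CC_iff using 1 2 3 4 by simp
qed

lemma CC_one: "(restrict id X, restrict id Qnn) \<in> CC"
proof -
  have "restrict id Qnn \<in> carrier AutQ" using AQ_iff perm_on_id[of Qnn] id_mono[of Qnn] by simp
  moreover have "\<forall>x\<in>X. \<forall>y\<in>X. d (restrict id X x) (restrict id X y) = restrict id Qnn (d x y)"
    using Qnn_d by simp
  ultimately show ?thesis unfolding CC_iff using perm_on_id[of X] by simp
qed

lemma CC_inv:
  assumes p: "p \<in> CC"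
  shows "(pinv X (fst p), pinv Qnn (snd p)) \<in> CC"
proof -
  have pp: "perm_on X (fst p)" "snd p \<in> carrier AutQ"
    and pd: "\<And>x y. x \<in> X \<Longrightarrow> y \<in> X \<Longrightarrow> d (fst p x) (fst p y) = snd p (d x y)"
    and po: "\<And>x y. x \<in> X \<Longrightarrow> y \<in> X \<Longrightarrow> lt x y \<Longrightarrow> lt (fst p x) (fst p y)"
    using p unfolding CC_iff by blast+
  have gp: "perm_on Qnn (snd p)" "strict_mono_on Qnn (snd p)" using pp(2) AQ_iff by auto
  have 1: "perm_on X (pinv X (fst p))" by (rule perm_on_pinv[OF pp(1)])
  have 2: "pinv Qnn (snd p) \<in> carrier AutQ"
    unfolding AQ_iff using perm_on_pinv[OF gp(1)] pinv_mono[OF gp] by simp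
  have 3: "d (pinv X (fst p) x) (pinv X (fst p) y) = pinv Qnn (snd p) (d x y)"
    if xy: "x \<in> X" "y \<in> X" for x y
  proof -
    have i: "pinv X (fst p) x \<in> X" "pinv X (fst p) y \<in> X" using perm_onD[OF 1] xy by auto
    have "d x y = snd p (d (pinv X (fst p) x) (pinv X (fst p) y))"
      using pd[OF i] pinv_apply2[OF pp(1)] xy by simp
    thus ?thesis using pinv_apply1[OF gp(1) Qnn_d[OF i]] by simp
  qed
  have 4: "lt (pinv X (fst p) x) (pinv X (fst p) y)"
    if xy: "x \<in> X" "y \<in> X" "lt x y" for x y
  proof -
    have i: "pinv X (fst p) x \<in> X" "pinv X (fst p) y \<in> X" using perm_onD[OF 1] xy by auto
    have e: "fst p (pinv X (fst p) x) = x" "fst p (pinv X (fst p) y) = y"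
      using pinv_apply2[OF pp(1)] xy by auto
    show ?thesis
    proof (rule ccontr)
      assume n: "\<not> lt (pinv X (fst p) x) (pinv X (fst p) y)"
      show False
      proof (cases "pinv X (fst p) x = pinv X (fst p) y")
        case True
        hence "x = y" using e by metis
        thus False using lt_irrefl xy by blast
      next
        case False
        hence "lt (pinv X (fst p) y) (pinv X (fst p) x)" using lt_total[OF i] n by blast
        hence "lt y x" using po[OF i(2) i(1)] e by simp
        thus False using lt_asym[OF xy(1,2,3)] by simp
      qed
    qed
  qed
  show ?thesis unfolding CC_iff using 1 2 3 4 by simp
qed

lemma group_AU: "group AU"
proof (rule groupI)
  show "\<And>x y. x \<in> carrier AU \<Longrightarrow> y \<in> carrier AU \<Longrightarrow> x \<otimes>\<^bsub>AU\<^esub> y \<in> carrier AU"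
    unfolding AU_carrier AU_mult by (rule CC_mult)
  show "\<one>\<^bsub>AU\<^esub> \<in> carrier AU" unfolding AU_carrier AU_one by (rule CC_one)
  fix x y z assume x: "x \<in> carrier AU"
  have xp: "perm_on X (fst x)" "perm_on Qnn (snd x)" using x unfolding AU_carrier CC_iff AQ_iff by auto
  { assume y: "y \<in> carrier AU" and z: "z \<in> carrier AU"
    have yp: "perm_on X (fst y)" "perm_on Qnn (snd y)" using y unfolding AU_carrier CC_iff AQ_iff by auto
    have zp: "perm_on X (fst z)" "perm_on Qnn (snd z)" using z unfolding AU_carrier CC_iff AQ_iff by auto
    show "x \<otimes>\<^bsub>AU\<^esub> y \<otimes>\<^bsub>AU\<^esub> z = x \<otimes>\<^bsub>AU\<^esub> (y \<otimes>\<^bsub>AU\<^esub> z)"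
      unfolding AU_mult using compose_assoc'[OF xp(1) yp(1) zp(1)] compose_assoc'[OF xp(2) yp(2) zp(2)] by simp }
  show "\<one>\<^bsub>AU\<^esub> \<otimes>\<^bsub>AU\<^esub> x = x"
    unfolding AU_mult AU_one using compose_id_l[OF xp(1)] compose_id_l[OF xp(2)] by simp
  have "(pinv X (fst x), pinv Qnn (snd x)) \<in> carrier AU" using CC_inv x AU_carrier by simp
  moreover have "(pinv X (fst x), pinv Qnn (snd x)) \<otimes>\<^bsub>AU\<^esub> x = \<one>\<^bsub>AU\<^esub>"
    unfolding AU_mult AU_one using compose_pinv_l[OF xp(1)] compose_pinv_l[OF xp(2)] by simp
  ultimately show "\<exists>y\<in>carrier AU. y \<otimes>\<^bsub>AU\<^esub> x = \<one>\<^bsub>AU\<^esub>" by blast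
qed

lemma AU_inv: assumes "p \<in> CC" shows "inv\<^bsub>AU\<^esub> p = (pinv X (fst p), pinv Qnn (snd p))"
proof (rule group.inv_equality[OF group_AU])
  have xp: "perm_on X (fst p)" "perm_on Qnn (snd p)" using assms unfolding CC_iff AQ_iff by auto
  show "(pinv X (fst p), pinv Qnn (snd p)) \<otimes>\<^bsub>AU\<^esub> p = \<one>\<^bsub>AU\<^esub>"
    unfolding AU_mult AU_one using compose_pinv_l[OF xp(1)] compose_pinv_l[OF xp(2)] by simp
  show "p \<in> carrier AU" using assms AU_carrier by simp
  show "(pinv X (fst p), pinv Qnn (snd p)) \<in> carrier AU" using CC_inv assms AU_carrier by simp
qed

lemma topspace_TU: "topspace TU = CC"
proof -
  have "CC \<subseteq> topspace (prod_topology (PT X) (PT Qnn))"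
  proof
    fix p assume "p \<in> CC"
    hence "perm_on X (fst p)" "perm_on Qnn (snd p)" unfolding CC_iff AQ_iff by auto
    hence "fst p \<in> topspace (PT X)" "snd p \<in> topspace (PT Qnn)" using perm_on_PT by blast+
    thus "p \<in> topspace (prod_topology (PT X) (PT Qnn))" by (cases p) simp
  qed
  thus ?thesis unfolding AutU_top_def by auto
qed

lemma fstU: "continuous_map TU (PT X) fst"
  unfolding AutU_top_def by (rule continuous_map_from_subtopology[OF continuous_map_fst])
lemma sndU: "continuous_map TU (PT Qnn) snd"
  unfolding AutU_top_def by (rule continuous_map_from_subtopology[OF continuous_map_snd])

lemma into_TU:
  assumes "continuous_map T (PT X) f1" "continuous_map T (PT Qnn) f2"
    "\<And>t. t \<in> topspace T \<Longrightarrow> (f1 t, f2 t) \<in> CC"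
  shows "continuous_map T TU (\<lambda>t. (f1 t, f2 t))"
  unfolding AutU_top_def continuous_map_in_subtopology
  using assms by (auto intro: continuous_map_pairedI)

lemma topgroup_AU: "topological_group AU TU"
  unfolding topological_group_def
proof (intro conjI)
  show "group AU" by (rule group_AU)
  show "topspace TU = carrier AU" using topspace_TU AU_carrier by simp
  let ?P = "prod_topology TU TU"
  have tP: "topspace ?P = CC \<times> CC" using topspace_TU by simp
  have c1: "continuous_map ?P (PT X) (\<lambda>t. fst (fst t))"
    using continuous_map_compose[OF continuous_map_fst fstU] by (simp add: o_def)
  have c2: "continuous_map ?P (PT X) (\<lambda>t. fst (snd t))"
    using continuous_map_compose[OF continuous_map_snd fstU] by (simp add: o_def)
  have c3: "continuous_map ?P (PT Qnn) (\<lambda>t. snd (fst t))"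
    using continuous_map_compose[OF continuous_map_fst sndU] by (simp add: o_def)
  have c4: "continuous_map ?P (PT Qnn) (\<lambda>t. snd (snd t))"
    using continuous_map_compose[OF continuous_map_snd sndU] by (simp add: o_def)
  have pe: "perm_on X (fst p) \<and> perm_on Qnn (snd p)" if "p \<in> CC" for p
    using that unfolding CC_iff AQ_iff by auto
  have "continuous_map ?P TU (\<lambda>t. (compose X (fst (fst t)) (fst (snd t)), compose Qnn (snd (fst t)) (snd (snd t))))"
  proof (rule into_TU)
    show "continuous_map ?P (PT X) (\<lambda>t. compose X (fst (fst t)) (fst (snd t)))"
      by (rule cont_compose_PT[OF c1 c2]) (use tP pe in auto)
    show "continuous_map ?P (PT Qnn) (\<lambda>t. compose Qnn (snd (fst t)) (snd (snd t)))"
      by (rule cont_compose_PT[OF c3 c4]) (use tP pe in auto)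
    show "\<And>t. t \<in> topspace ?P \<Longrightarrow> (compose X (fst (fst t)) (fst (snd t)), compose Qnn (snd (fst t)) (snd (snd t))) \<in> CC"
      using tP CC_mult by auto
  qed
  moreover have "(\<lambda>(x, y). x \<otimes>\<^bsub>AU\<^esub> y) = (\<lambda>t. (compose X (fst (fst t)) (fst (snd t)), compose Qnn (snd (fst t)) (snd (snd t))))"
    by (auto simp: AU_mult)
  ultimately show "continuous_map ?P TU (\<lambda>(x, y). x \<otimes>\<^bsub>AU\<^esub> y)" by simp
  have "continuous_map TU TU (\<lambda>t. (pinv X (fst t), pinv Qnn (snd t)))"
  proof (rule into_TU)
    show "continuous_map TU (PT X) (\<lambda>t. pinv X (fst t))"
      by (rule cont_pinv_PT[OF fstU]) (use topspace_TU pe in auto)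
    show "continuous_map TU (PT Qnn) (\<lambda>t. pinv Qnn (snd t))"
      by (rule cont_pinv_PT[OF sndU]) (use topspace_TU pe in auto)
    show "\<And>t. t \<in> topspace TU \<Longrightarrow> (pinv X (fst t), pinv Qnn (snd t)) \<in> CC"
      using topspace_TU CC_inv by auto
  qed
  thus "continuous_map TU TU (\<lambda>x. inv\<^bsub>AU\<^esub> x)"
    by (rule continuous_map_eq) (simp add: topspace_TU AU_inv)
qed


abbreviation "KK \<equiv> {p \<in> CC. snd p = restrict id Qnn}"

lemma carrier_IsoU: "carrier (IsoU X d lt) = KK" by (simp add: IsoU_def AutU_def)

lemma IsoU_eq: "IsoU X d lt = AU\<lparr>carrier := KK\<rparr>" by (simp add: IsoU_def AutU_def)

lemma subgroup_K: "subgroup KK AU"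
proof (rule group.subgroupI[OF group_AU])
  show "KK \<subseteq> carrier AU" using AU_carrier by auto
  show "KK \<noteq> {}" using CC_one by auto
  fix a assume a: "a \<in> KK"
  show "inv\<^bsub>AU\<^esub> a \<in> KK" using a AU_inv[of a] CC_inv[of a] pinv_id[of Qnn] by simp
  fix b assume b: "b \<in> KK"
  show "a \<otimes>\<^bsub>AU\<^esub> b \<in> KK" using a b AU_mult CC_mult[of a b] compose_id_l[OF perm_on_id[of Qnn]] by simp
qed

lemma group_IsoU: "group (IsoU X d lt)"
  unfolding IsoU_eq by (rule subgroup.subgroup_is_group[OF subgroup_K group_AU])

lemma topspace_IsoU_top: "topspace (IsoU_top X d lt) = KK"
  unfolding IsoU_top_def carrier_IsoU using topspace_TU by auto

lemma IsoU_mult: "x \<otimes>\<^bsub>IsoU X d lt\<^esub> y = x \<otimes>\<^bsub>AU\<^esub> y" by (simp add: IsoU_eq)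

lemma IsoU_inv: "x \<in> KK \<Longrightarrow> inv\<^bsub>IsoU X d lt\<^esub> x = inv\<^bsub>AU\<^esub> x"
  unfolding IsoU_eq by (rule group.m_inv_consistent[OF group_AU subgroup_K])

lemma topgroup_IsoU: "topological_group (IsoU X d lt) (IsoU_top X d lt)"
  unfolding topological_group_def
proof (intro conjI)
  show "group (IsoU X d lt)" by (rule group_IsoU)
  show "topspace (IsoU_top X d lt) = carrier (IsoU X d lt)" using topspace_IsoU_top carrier_IsoU by simp
  have TG: "topological_group AU TU" by (rule topgroup_AU)
  have m: "continuous_map (prod_topology TU TU) TU (\<lambda>(x, y). x \<otimes>\<^bsub>AU\<^esub> y)"
    and i: "continuous_map TU TU (\<lambda>x. inv\<^bsub>AU\<^esub> x)" using TG unfolding topological_group_def by auto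
  have pe: "prod_topology (IsoU_top X d lt) (IsoU_top X d lt) = subtopology (prod_topology TU TU) (KK \<times> KK)"
    unfolding IsoU_top_def carrier_IsoU by (simp add: subtopology_Times)
  have "continuous_map (prod_topology (IsoU_top X d lt) (IsoU_top X d lt)) TU (\<lambda>(x, y). x \<otimes>\<^bsub>AU\<^esub> y)"
    unfolding pe by (rule continuous_map_from_subtopology[OF m])
  moreover have "(\<lambda>(x, y). x \<otimes>\<^bsub>AU\<^esub> y) \<in> topspace (prod_topology (IsoU_top X d lt) (IsoU_top X d lt)) \<rightarrow> KK"
    using subgroup.m_closed[OF subgroup_K] topspace_IsoU_top by auto
  ultimately have "continuous_map (prod_topology (IsoU_top X d lt) (IsoU_top X d lt)) (IsoU_top X d lt) (\<lambda>(x, y). x \<otimes>\<^bsub>AU\<^esub> y)"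
    unfolding IsoU_top_def carrier_IsoU continuous_map_in_subtopology by simp
  thus "continuous_map (prod_topology (IsoU_top X d lt) (IsoU_top X d lt)) (IsoU_top X d lt)
     (\<lambda>(x, y). x \<otimes>\<^bsub>IsoU X d lt\<^esub> y)" unfolding IsoU_mult .
  have "continuous_map (IsoU_top X d lt) TU (\<lambda>x. inv\<^bsub>AU\<^esub> x)"
    unfolding IsoU_top_def by (rule continuous_map_from_subtopology[OF i])
  moreover have "(\<lambda>x. inv\<^bsub>AU\<^esub> x) \<in> topspace (IsoU_top X d lt) \<rightarrow> KK"
    using subgroup.m_inv_closed[OF subgroup_K] topspace_IsoU_top by auto
  ultimately have "continuous_map (IsoU_top X d lt) (IsoU_top X d lt) (\<lambda>x. inv\<^bsub>AU\<^esub> x)"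
    unfolding IsoU_top_def carrier_IsoU continuous_map_in_subtopology by simp
  thus "continuous_map (IsoU_top X d lt) (IsoU_top X d lt) (\<lambda>x. inv\<^bsub>IsoU X d lt\<^esub> x)"
    by (rule continuous_map_eq) (simp add: topspace_IsoU_top IsoU_inv)
qed


definition Phi where
  "Phi = (SOME \<Phi>. bij_betw \<Phi> MU X \<and> (\<forall>a\<in>MU. \<forall>b\<in>MU. d (\<Phi> a) (\<Phi> b) = dM a b \<and> (ltM a b \<longleftrightarrow> lt (\<Phi> a) (\<Phi> b))))"

lemma Phi_props: "bij_betw Phi MU X \<and> (\<forall>a\<in>MU. \<forall>b\<in>MU. d (Phi a) (Phi b) = dM a b \<and> (ltM a b \<longleftrightarrow> lt (Phi a) (Phi b)))"
  unfolding Phi_def by (rule someI_ex[OF iso_exists])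

definition Phii where "Phii = inv_into MU Phi"

lemma Phi_bij: "bij_betw Phi MU X" using Phi_props by blast
lemma Phi_in: "a \<in> MU \<Longrightarrow> Phi a \<in> X" using Phi_bij unfolding bij_betw_def by auto
lemma Phii_in: "x \<in> X \<Longrightarrow> Phii x \<in> MU" unfolding Phii_def using Phi_bij
  by (metis bij_betw_def inv_into_into)
lemma Phi_Phii: "x \<in> X \<Longrightarrow> Phi (Phii x) = x" unfolding Phii_def using Phi_bij
  by (metis bij_betw_def f_inv_into_f)
lemma Phii_Phi: "a \<in> MU \<Longrightarrow> Phii (Phi a) = a" unfolding Phii_def using Phi_bij
  by (metis bij_betw_def inv_into_f_f)
lemma Phi_d: "a \<in> MU \<Longrightarrow> b \<in> MU \<Longrightarrow> d (Phi a) (Phi b) = dM a b" using Phi_props by blast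
lemma Phi_lt: "a \<in> MU \<Longrightarrow> b \<in> MU \<Longrightarrow> ltM a b \<longleftrightarrow> lt (Phi a) (Phi b)" using Phi_props by blast

end

definition sig :: "(rat \<Rightarrow> rat) \<Rightarrow> (rat \<Rightarrow> rat) \<Rightarrow> (rat \<Rightarrow> rat)" where
  "sig h u = (\<lambda>r. if 0 < r then u (pinv Qnn h r) else 0)"

lemma AQ_facts:
  assumes h: "h \<in> carrier AutQ"
  shows "perm_on Qnn h" "strict_mono_on Qnn h" "h 0 = 0" "pinv Qnn h 0 = 0"
    "\<And>r. 0 < r \<Longrightarrow> 0 < h r" "\<And>r. 0 < r \<Longrightarrow> 0 < pinv Qnn h r"
    "\<And>r. 0 < r \<Longrightarrow> h (pinv Qnn h r) = r" "\<And>r. 0 < r \<Longrightarrow> pinv Qnn h (h r) = r"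
proof -
  show p: "perm_on Qnn h" and m: "strict_mono_on Qnn h" using h AQ_iff by auto
  show h0: "h 0 = 0" by (rule AQ_zero[OF h])
  have z: "(0::rat) \<in> Qnn" by (simp add: Qnn_def)
  show p0: "pinv Qnn h 0 = 0" using pinv_apply1[OF p z] h0 by simp
  have pm: "strict_mono_on Qnn (pinv Qnn h)" by (rule pinv_mono[OF p m])
  fix r :: rat
  { assume r: "0 < r"
    hence rQ: "r \<in> Qnn" by (simp add: Qnn_def)
    show "0 < h r" using strict_mono_onD[OF m z rQ r] h0 by simp
    show "0 < pinv Qnn h r" using strict_mono_onD[OF pm z rQ r] p0 by simp
    show "h (pinv Qnn h r) = r" by (rule pinv_apply2[OF p rQ])
    show "pinv Qnn h (h r) = r" by (rule pinv_apply1[OF p rQ]) }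
qed

lemma sig_MU:
  assumes h: "h \<in> carrier AutQ" and u: "u \<in> MU"
  shows "sig h u \<in> MU"
proof -
  note hf = AQ_facts[OF h]
  have "{r. sig h u r \<noteq> 0} \<subseteq> h ` {s. u s \<noteq> 0}"
  proof
    fix r assume "r \<in> {r. sig h u r \<noteq> 0}"
    hence r: "0 < r" "u (pinv Qnn h r) \<noteq> 0" unfolding sig_def by (auto split: if_splits)
    thus "r \<in> h ` {s. u s \<noteq> 0}" using hf(7)[OF r(1)] by (metis (mono_tags, lifting) image_eqI mem_Collect_eq)
  qed
  moreover have "finite {s. u s \<noteq> 0}" using u unfolding MU_def by simp
  ultimately have "finite {r. sig h u r \<noteq> 0}" using finite_subset by blast
  moreover have "\<forall>r. sig h u r \<noteq> 0 \<longrightarrow> 0 < r" unfolding sig_def by simp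
  ultimately show ?thesis unfolding MU_def by simp
qed

lemma AQ_pinv_compose:
  assumes h1: "h1 \<in> carrier AutQ" and h2: "h2 \<in> carrier AutQ" and r: "r \<in> Qnn"
  shows "pinv Qnn (compose Qnn h1 h2) r = pinv Qnn h2 (pinv Qnn h1 r)"
proof -
  have c: "compose Qnn h1 h2 \<in> carrier AutQ"
    using h1 h2 unfolding AQ_iff using perm_on_compose[of Qnn h1 h2] compose_mono[of Qnn h2 h1] by simp
  have "inv\<^bsub>AutQ\<^esub> (h1 \<otimes>\<^bsub>AutQ\<^esub> h2) = inv\<^bsub>AutQ\<^esub> h2 \<otimes>\<^bsub>AutQ\<^esub> inv\<^bsub>AutQ\<^esub> h1"
    by (rule group.inv_mult_group[OF group_AutQ h1 h2])
  hence "pinv Qnn (compose Qnn h1 h2) = compose Qnn (pinv Qnn h2) (pinv Qnn h1)"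
    using AQ_inv[OF c] AQ_inv[OF h1] AQ_inv[OF h2] AQ_mult by simp
  thus ?thesis using r by (simp add: compose_eq)
qed

lemma sig_comp:
  assumes h1: "h1 \<in> carrier AutQ" and h2: "h2 \<in> carrier AutQ"
  shows "sig h1 (sig h2 u) = sig (compose Qnn h1 h2) u"
proof
  fix r show "sig h1 (sig h2 u) r = sig (compose Qnn h1 h2) u r"
  proof (cases "0 < r")
    case True
    hence rQ: "r \<in> Qnn" by (simp add: Qnn_def)
    have "0 < pinv Qnn h1 r" using AQ_facts(6)[OF h1 True] .
    thus ?thesis unfolding sig_def using True AQ_pinv_compose[OF h1 h2 rQ] by simp
  next
    case False thus ?thesis unfolding sig_def by simp
  qed
qed

lemma sig_id: assumes u: "u \<in> MU" shows "sig (restrict id Qnn) u = u"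
proof
  fix r show "sig (restrict id Qnn) u r = u r"
  proof (cases "0 < r")
    case True
    hence "r \<in> Qnn" by (simp add: Qnn_def)
    thus ?thesis unfolding sig_def pinv_id using True by simp
  next
    case False
    hence "u r = 0" using u unfolding MU_def by auto
    thus ?thesis unfolding sig_def using False by simp
  qed
qed

lemma sig_dist:
  assumes h: "h \<in> carrier AutQ" and u: "u \<in> MU" and v: "v \<in> MU"
  shows "dM (sig h u) (sig h v) = h (dM u v)"
proof (cases "u = v")
  case True thus ?thesis using AQ_facts(3)[OF h] by simp
next
  case False
  note hf = AQ_facts[OF h]
  define t where "t = dM u v"
  have t: "0 < t" "u t \<noteq> v t" using dM_neq[OF u v False] t_def by auto
  have ab: "\<And>s. t < s \<Longrightarrow> u s = v s" using dM_above[OF u v] t_def by simp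
  have su: "sig h u \<in> MU" "sig h v \<in> MU" using sig_MU h u v by auto
  have "dM (sig h u) (sig h v) = h t"
  proof (rule dM_eqI[OF su])
    show "sig h u (h t) \<noteq> sig h v (h t)" unfolding sig_def using hf(5)[OF t(1)] hf(8)[OF t(1)] t(2) by simp
    fix s assume s: "h t < s"
    hence s0: "0 < s" using hf(5)[OF t(1)] by simp
    have tQ: "t \<in> Qnn" "s \<in> Qnn" using t(1) s0 by (auto simp: Qnn_def)
    have "pinv Qnn h (h t) < pinv Qnn h s"
      using strict_mono_onD[OF pinv_mono[OF hf(1,2)] perm_onD[OF hf(1) tQ(1)] tQ(2) s] .
    hence "t < pinv Qnn h s" using hf(8)[OF t(1)] by simp
    thus "sig h u s = sig h v s" unfolding sig_def using ab s0 by simp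
  qed
  thus ?thesis using t_def by simp
qed

lemma sig_lt:
  assumes h: "h \<in> carrier AutQ" and u: "u \<in> MU" and v: "v \<in> MU" and l: "ltM u v"
  shows "ltM (sig h u) (sig h v)"
proof -
  note hf = AQ_facts[OF h]
  have ne: "u \<noteq> v" using l ltM_irrefl by blast
  define t where "t = dM u v"
  have t: "0 < t" "u t < v t" using dM_neq[OF u v ne] l t_def unfolding ltM_def by auto
  have su: "sig h u \<in> MU" "sig h v \<in> MU" using sig_MU h u v by auto
  have dd: "dM (sig h u) (sig h v) = h t" using sig_dist[OF h u v] t_def by simp
  have "sig h u (h t) < sig h v (h t)" unfolding sig_def using hf(5)[OF t(1)] hf(8)[OF t(1)] t(2) by simp
  moreover hence "sig h u \<noteq> sig h v" by auto
  ultimately show ?thesis unfolding ltM_def dd by simp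
qed

lemma sig_agree:
  assumes h: "h \<in> carrier AutQ" and h': "h' \<in> carrier AutQ" and u: "u \<in> MU"
    and ag: "\<And>c. u c \<noteq> 0 \<Longrightarrow> h c = h' c"
  shows "sig h u = sig h' u"
proof
  fix r show "sig h u r = sig h' u r"
  proof (cases "0 < r")
    case False thus ?thesis unfolding sig_def by simp
  next
    case True
    note hf = AQ_facts[OF h] and hf' = AQ_facts[OF h']
    define s where "s = pinv Qnn h r"
    define s' where "s' = pinv Qnn h' r"
    have s: "0 < s" "h s = r" using hf(6)[OF True] hf(7)[OF True] s_def by auto
    have s': "0 < s'" "h' s' = r" using hf'(6)[OF True] hf'(7)[OF True] s'_def by auto
    have "u s = u s'"
    proof (cases "u s = 0")
      case False
      hence "h' s = r" using ag s by simp
      hence "s = s'" using hf'(8)[OF s(1)] s'_def by simp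
      thus ?thesis by simp
    next
      case True
      show ?thesis
      proof (rule ccontr)
        assume "u s \<noteq> u s'"
        hence "u s' \<noteq> 0" using True by simp
        hence "h s' = r" using ag s' by simp
        hence "s' = s" using hf(8)[OF s'(1)] s_def by simp
        thus False using \<open>u s \<noteq> u s'\<close> by simp
      qed
    qed
    thus ?thesis unfolding sig_def s_def s'_def using True by simp
  qed
qed


context FL begin

definition sec :: "(rat \<Rightarrow> rat) \<Rightarrow> ('a \<Rightarrow> 'a) \<times> (rat \<Rightarrow> rat)" where
  "sec h = (restrict (\<lambda>x. Phi (sig h (Phii x))) X, h)"

lemma secF_in: "h \<in> carrier AutQ \<Longrightarrow> x \<in> X \<Longrightarrow> Phi (sig h (Phii x)) \<in> X"
  using Phi_in sig_MU Phii_in by blast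

lemma secF_d: assumes h: "h \<in> carrier AutQ" and x: "x \<in> X" and y: "y \<in> X"
  shows "d (Phi (sig h (Phii x))) (Phi (sig h (Phii y))) = h (d x y)"
proof -
  have "d (Phi (sig h (Phii x))) (Phi (sig h (Phii y))) = dM (sig h (Phii x)) (sig h (Phii y))"
    using Phi_d sig_MU[OF h] Phii_in x y by blast
  also have "\<dots> = h (dM (Phii x) (Phii y))" using sig_dist[OF h] Phii_in x y by blast
  also have "dM (Phii x) (Phii y) = d x y" using Phi_d[OF Phii_in[OF x] Phii_in[OF y]] Phi_Phii x y by simp
  finally show ?thesis .
qed

lemma sec_CC: assumes h: "h \<in> carrier AutQ" shows "sec h \<in> CC"
proof -
  note hf = AQ_facts[OF h]
  define F where "F = (\<lambda>x. Phi (sig h (Phii x)))"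
  have FX: "\<And>x. x \<in> X \<Longrightarrow> F x \<in> X" unfolding F_def using secF_in[OF h] .
  have Fd: "\<And>x y. x \<in> X \<Longrightarrow> y \<in> X \<Longrightarrow> d (F x) (F y) = h (d x y)" unfolding F_def using secF_d[OF h] .
  have inj: "inj_on F X"
  proof (rule inj_onI)
    fix x y assume xy: "x \<in> X" "y \<in> X" "F x = F y"
    hence "h (d x y) = 0" using Fd[OF xy(1,2)] dX_self[OF FX[OF xy(1)]] by simp
    hence "h (d x y) = h 0" using hf(3) by simp
    moreover have "inj_on h Qnn" using hf(1) unfolding perm_on_def bij_betw_def by simp
    moreover have "(0::rat) \<in> Qnn" by (simp add: Qnn_def)
    ultimately have "d x y = 0" using Qnn_d[OF xy(1,2)] by (meson inj_onD)
    thus "x = y" using dX_eq0 xy by blast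
  qed
  have hi: "pinv Qnn h \<in> carrier AutQ" using h AQ_inv group.inv_closed[OF group_AutQ] by metis
  have surj: "F ` X = X"
  proof
    show "F ` X \<subseteq> X" using FX by blast
    show "X \<subseteq> F ` X"
    proof
      fix y assume y: "y \<in> X"
      define w where "w = sig (pinv Qnn h) (Phii y)"
      have w: "w \<in> MU" unfolding w_def using sig_MU[OF hi Phii_in[OF y]] .
      have "F (Phi w) = Phi (sig h w)" unfolding F_def using Phii_Phi[OF w] by simp
      also have "sig h w = sig (compose Qnn h (pinv Qnn h)) (Phii y)" unfolding w_def by (rule sig_comp[OF h hi])
      also have "compose Qnn h (pinv Qnn h) = restrict id Qnn" by (rule compose_pinv_r[OF hf(1)])
      also have "sig (restrict id Qnn) (Phii y) = Phii y" by (rule sig_id[OF Phii_in[OF y]])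
      finally have "F (Phi w) = y" using Phi_Phii[OF y] by simp
      thus "y \<in> F ` X" using Phi_in[OF w] by (metis image_eqI)
    qed
  qed
  have perm: "perm_on X (restrict F X)"
  proof -
    have "bij_betw F X X" using inj surj unfolding bij_betw_def by simp
    hence "bij_betw (restrict F X) X X" by (rule bij_betw_cong[THEN iffD1, rotated]) simp
    thus ?thesis unfolding perm_on_def by simp
  qed
  have ord: "lt (F x) (F y)" if xy: "x \<in> X" "y \<in> X" "lt x y" for x y
  proof -
    have "ltM (Phii x) (Phii y)" using Phi_lt[OF Phii_in[OF xy(1)] Phii_in[OF xy(2)]] Phi_Phii xy by simp
    hence "ltM (sig h (Phii x)) (sig h (Phii y))" using sig_lt[OF h Phii_in[OF xy(1)] Phii_in[OF xy(2)]] by simp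
    thus ?thesis unfolding F_def using Phi_lt sig_MU[OF h] Phii_in xy by blast
  qed
  show ?thesis unfolding CC_iff sec_def F_def[symmetric] using perm h Fd ord by simp
qed

lemma sec_hom:
  assumes h1: "h1 \<in> carrier AutQ" and h2: "h2 \<in> carrier AutQ"
  shows "sec (compose Qnn h1 h2) = sec h1 \<otimes>\<^bsub>AU\<^esub> sec h2"
proof -
  have "restrict (\<lambda>x. Phi (sig (compose Qnn h1 h2) (Phii x))) X =
      compose X (restrict (\<lambda>x. Phi (sig h1 (Phii x))) X) (restrict (\<lambda>x. Phi (sig h2 (Phii x))) X)"
  proof -
    have pt: "Phi (sig (compose Qnn h1 h2) (Phii x)) = Phi (sig h1 (Phii (Phi (sig h2 (Phii x)))))" if x: "x \<in> X" for x
      using Phii_Phi sig_MU[OF h2 Phii_in[OF x]] sig_comp[OF h1 h2] by simp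
    show ?thesis unfolding compose_def[of X] by (intro restrict_ext) (simp add: pt secF_in[OF h2])
  qed
  thus ?thesis unfolding sec_def AU_mult by simp
qed

lemma sec_cont: "continuous_map AutQ_top TU sec"
proof -
  have "continuous_map AutQ_top TU (\<lambda>h. (restrict (\<lambda>x. Phi (sig h (Phii x))) X, h))"
  proof (rule into_TU)
    show "continuous_map AutQ_top (PT Qnn) (\<lambda>h. h)" by (rule AQT_PT')
    show "\<And>t. t \<in> topspace AutQ_top \<Longrightarrow> (restrict (\<lambda>x. Phi (sig t (Phii x))) X, t) \<in> CC"
      using sec_CC unfolding sec_def topspace_AQT by blast
    show "continuous_map AutQ_top (PT X) (\<lambda>h. restrict (\<lambda>x. Phi (sig h (Phii x))) X)"
    proof (rule cont_PT)
      fix t assume "t \<in> topspace AutQ_top"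
      hence "perm_on X (restrict (\<lambda>x. Phi (sig t (Phii x))) X)" using sec_CC unfolding sec_def topspace_AQT CC_iff by auto
      hence "restrict (\<lambda>x. Phi (sig t (Phii x))) X \<in> topspace (PT X)" by (rule perm_on_PT)
      thus "restrict (\<lambda>x. Phi (sig t (Phii x))) X \<in> X \<rightarrow>\<^sub>E X" by (simp only: topspace_PT)
    next
      fix a b assume a: "a \<in> X"
      define u where "u = Phii a"
      have u: "u \<in> MU" unfolding u_def by (rule Phii_in[OF a])
      define W where "W = {t \<in> topspace AutQ_top. restrict (\<lambda>x. Phi (sig t (Phii x))) X a = b}"
      have W: "W = {t \<in> topspace AutQ_top. Phi (sig t u) = b}" unfolding W_def u_def using a by simp
      have "openin AutQ_top W"
        unfolding openin_subopen[of AutQ_top W]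
      proof
        fix h0 assume h0: "h0 \<in> W"
        have h0A: "h0 \<in> carrier AutQ" using h0 W topspace_AQT by simp
        define N where "N = {t \<in> topspace AutQ_top. \<forall>c\<in>{r. u r \<noteq> 0}. t c = h0 c}"
        have "openin AutQ_top N" unfolding N_def
        proof (rule open_agree)
          show "finite {r. u r \<noteq> 0}" using u unfolding MU_def by simp
          fix c assume "c \<in> {r. u r \<noteq> 0}"
          hence "c \<in> Qnn" using u unfolding MU_def Qnn_def by auto
          thus "openin AutQ_top {t \<in> topspace AutQ_top. t c = h0 c}" using lc_eval[OF AQT_PT'] by blast
        qed
        moreover have "h0 \<in> N" unfolding N_def using h0 W by simp
        moreover have "N \<subseteq> W"
        proof
          fix t assume t: "t \<in> N"
          hence tA: "t \<in> carrier AutQ" and ag: "\<And>c. u c \<noteq> 0 \<Longrightarrow> t c = h0 c"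
            unfolding N_def topspace_AQT by auto
          have "sig t u = sig h0 u" by (rule sig_agree[OF tA h0A u ag])
          thus "t \<in> W" using h0 t W unfolding N_def by simp
        qed
        ultimately show "\<exists>T. openin AutQ_top T \<and> h0 \<in> T \<and> T \<subseteq> W" by blast
      qed
      thus "openin AutQ_top {t \<in> topspace AutQ_top. restrict (\<lambda>x. Phi (sig t (Phii x))) X a = b}"
        unfolding W_def .
    qed
  qed
  thus ?thesis unfolding sec_def[abs_def] .
qed

end


context FL begin

abbreviation "Psi \<equiv> (\<lambda>(n, h). n \<otimes>\<^bsub>AU\<^esub> sec h)"
abbreviation "Psi' \<equiv> (\<lambda>f. (f \<otimes>\<^bsub>AU\<^esub> inv\<^bsub>AU\<^esub> (sec (snd f)), snd f))"

lemma sec_AU: "h \<in> carrier AutQ \<Longrightarrow> sec h \<in> carrier AU" using sec_CC AU_carrier by simp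
lemma snd_sec[simp]: "snd (sec h) = h" by (simp add: sec_def)

lemma snd_mult: "snd (p \<otimes>\<^bsub>AU\<^esub> q) = compose Qnn (snd p) (snd q)" by (simp add: AU_mult)

lemma snd_inv: "p \<in> CC \<Longrightarrow> snd (inv\<^bsub>AU\<^esub> p) = pinv Qnn (snd p)" by (simp add: AU_inv)

lemma CC_snd: "p \<in> CC \<Longrightarrow> snd p \<in> carrier AutQ" unfolding CC_iff by simp

lemma incl_cont: "continuous_map (IsoU_top X d lt) TU (\<lambda>p. p)"
  unfolding IsoU_top_def using continuous_map_from_subtopology[OF continuous_map_id] by (simp add: id_def)

lemma snd_cont: "continuous_map TU AutQ_top snd"
  by (rule into_AQT[OF sndU]) (auto simp: topspace_TU CC_snd)

lemma Psi'_K: assumes f: "f \<in> CC" shows "f \<otimes>\<^bsub>AU\<^esub> inv\<^bsub>AU\<^esub> (sec (snd f)) \<in> KK"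
proof -
  interpret G: group AU by (rule group_AU)
  have s: "sec (snd f) \<in> carrier AU" using sec_AU CC_snd f by blast
  have fc: "f \<in> carrier AU" using f AU_carrier by simp
  have "f \<otimes>\<^bsub>AU\<^esub> inv\<^bsub>AU\<^esub> (sec (snd f)) \<in> CC" using G.m_closed[OF fc G.inv_closed[OF s]] AU_carrier by simp
  moreover have "snd (f \<otimes>\<^bsub>AU\<^esub> inv\<^bsub>AU\<^esub> (sec (snd f))) = restrict id Qnn"
    using snd_mult snd_inv s AU_carrier compose_pinv_r[OF conjunct1[OF CC_snd[OF f, unfolded AQ_iff]]] by simp
  ultimately show ?thesis by simp
qed

lemma Psi_maps: "homeomorphic_maps (prod_topology (IsoU_top X d lt) AutQ_top) TU Psi Psi'"
  unfolding homeomorphic_maps_def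
proof (intro conjI ballI)
  interpret G: group AU by (rule group_AU)
  have TG: "topological_group AU TU" by (rule topgroup_AU)
  have m: "continuous_map (prod_topology TU TU) TU (\<lambda>(x, y). x \<otimes>\<^bsub>AU\<^esub> y)"
    and i: "continuous_map TU TU (\<lambda>x. inv\<^bsub>AU\<^esub> x)" using TG unfolding topological_group_def by auto
  have tp: "topspace (prod_topology (IsoU_top X d lt) AutQ_top) = KK \<times> carrier AutQ"
    by (simp add: topspace_IsoU_top topspace_AQT)
  have c1: "continuous_map (prod_topology (IsoU_top X d lt) AutQ_top) (prod_topology TU TU) (\<lambda>z. (fst z, sec (snd z)))"
  proof (rule continuous_map_pairedI)
    show "continuous_map (prod_topology (IsoU_top X d lt) AutQ_top) TU fst"
      using continuous_map_compose[OF continuous_map_fst incl_cont] by (simp add: o_def)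
    show "continuous_map (prod_topology (IsoU_top X d lt) AutQ_top) TU (\<lambda>z. sec (snd z))"
      using continuous_map_compose[OF continuous_map_snd sec_cont] by (simp add: o_def)
  qed
  have "continuous_map (prod_topology (IsoU_top X d lt) AutQ_top) TU ((\<lambda>(x, y). x \<otimes>\<^bsub>AU\<^esub> y) \<circ> (\<lambda>z. (fst z, sec (snd z))))"
    by (rule continuous_map_compose[OF c1 m])
  moreover have "(\<lambda>(x, y). x \<otimes>\<^bsub>AU\<^esub> y) \<circ> (\<lambda>z. (fst z, sec (snd z))) = Psi"
    by (auto simp: fun_eq_iff)
  ultimately show "continuous_map (prod_topology (IsoU_top X d lt) AutQ_top) TU Psi" by simp
  have c2: "continuous_map TU (prod_topology TU TU) (\<lambda>f. (f, inv\<^bsub>AU\<^esub> (sec (snd f))))"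
  proof (rule continuous_map_pairedI)
    show "continuous_map TU TU (\<lambda>f. f)" using continuous_map_id by (simp add: id_def)
    have "continuous_map TU TU ((\<lambda>x. inv\<^bsub>AU\<^esub> x) \<circ> (sec \<circ> snd))"
      by (intro continuous_map_compose[OF continuous_map_compose[OF snd_cont sec_cont] i])
    thus "continuous_map TU TU (\<lambda>f. inv\<^bsub>AU\<^esub> (sec (snd f)))" by (simp add: o_def)
  qed
  have "continuous_map TU TU ((\<lambda>(x, y). x \<otimes>\<^bsub>AU\<^esub> y) \<circ> (\<lambda>f. (f, inv\<^bsub>AU\<^esub> (sec (snd f)))))"
    by (rule continuous_map_compose[OF c2 m])
  hence c3: "continuous_map TU TU (\<lambda>f. f \<otimes>\<^bsub>AU\<^esub> inv\<^bsub>AU\<^esub> (sec (snd f)))" by (simp add: o_def)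
  have c4: "continuous_map TU (IsoU_top X d lt) (\<lambda>f. f \<otimes>\<^bsub>AU\<^esub> inv\<^bsub>AU\<^esub> (sec (snd f)))"
    unfolding IsoU_top_def continuous_map_in_subtopology carrier_IsoU
    using c3 Psi'_K topspace_TU by auto
  show "continuous_map TU (prod_topology (IsoU_top X d lt) AutQ_top) Psi'"
    by (rule continuous_map_pairedI[OF c4 snd_cont])
  fix z assume z: "z \<in> topspace (prod_topology (IsoU_top X d lt) AutQ_top)"
  then obtain n h where zz: "z = (n, h)" and n: "n \<in> KK" and h: "h \<in> carrier AutQ" using tp by auto
  have nc: "n \<in> carrier AU" using n AU_carrier by simp
  have sc: "sec h \<in> carrier AU" by (rule sec_AU[OF h])
  have sn: "snd (n \<otimes>\<^bsub>AU\<^esub> sec h) = h"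
    using snd_mult n compose_id_l[of Qnn h] h AQ_iff by simp
  show "Psi' (Psi z) = z" unfolding zz using sn nc sc by (simp add: G.m_assoc)
next
  interpret G: group AU by (rule group_AU)
  fix f assume f: "f \<in> topspace TU"
  have fc: "f \<in> carrier AU" using f topspace_TU AU_carrier by simp
  have sc: "sec (snd f) \<in> carrier AU" using sec_AU CC_snd f topspace_TU by simp
  show "Psi (Psi' f) = f" using fc sc by (simp add: G.m_assoc)
qed

lemma main_thm:
  "short_exact_top (IsoU X d lt) (IsoU_top X d lt) (AutU X d lt) (AutU_top X d lt)
           AutQ AutQ_top (\<lambda>p. p) snd
       \<and> (\<exists>s. s \<in> hom AutQ (AutU X d lt) \<and> continuous_map AutQ_top (AutU_top X d lt) s \<and>
              (\<forall>h\<in>carrier AutQ. snd (s h) = h) \<and>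
              (\<lambda>(n, h). n \<otimes>\<^bsub>AutU X d lt\<^esub> s h)
                 \<in> iso (semidirect (IsoU X d lt) AutQ (AutU X d lt) s) (AutU X d lt) \<and>
              homeomorphic_map (prod_topology (IsoU_top X d lt) AutQ_top) (AutU_top X d lt)
                 (\<lambda>(n, h). n \<otimes>\<^bsub>AutU X d lt\<^esub> s h))"
proof
  interpret G: group AU by (rule group_AU)
  have PM: "homeomorphic_maps (prod_topology (IsoU_top X d lt) AutQ_top) TU Psi Psi'" by (rule Psi_maps)
  have HM: "homeomorphic_map (prod_topology (IsoU_top X d lt) AutQ_top) TU Psi"
    using PM homeomorphic_map_maps by blast
  have HM': "homeomorphic_map TU (prod_topology (IsoU_top X d lt) AutQ_top) Psi'"
    using PM homeomorphic_map_maps homeomorphic_maps_sym by blast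
  show "short_exact_top (IsoU X d lt) (IsoU_top X d lt) AU TU AutQ AutQ_top (\<lambda>p. p) snd"
    unfolding short_exact_top_def
  proof (intro conjI)
    show "topological_group (IsoU X d lt) (IsoU_top X d lt)" by (rule topgroup_IsoU)
    show "topological_group AU TU" by (rule topgroup_AU)
    show "topological_group AutQ AutQ_top" by (rule topgroup_AutQ)
    show "(\<lambda>p. p) \<in> hom (IsoU X d lt) AU"
      unfolding hom_def using carrier_IsoU AU_carrier IsoU_mult by auto
    show "inj_on (\<lambda>p. p) (carrier (IsoU X d lt))" by simp
    show "continuous_map (IsoU_top X d lt) TU (\<lambda>p. p)" by (rule incl_cont)
    have e: "(\<lambda>p::('a \<Rightarrow> 'a) \<times> (rat \<Rightarrow> rat). p) = id" by (rule ext) simp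
    have "subtopology TU (id ` topspace (IsoU_top X d lt)) = IsoU_top X d lt"
      unfolding topspace_IsoU_top by (simp add: IsoU_top_def carrier_IsoU)
    thus "embedding_map (IsoU_top X d lt) TU (\<lambda>p. p)"
      unfolding embedding_map_def e homeomorphic_map_id by simp
    show "snd \<in> hom AU AutQ"
      unfolding hom_def using AU_carrier CC_snd snd_mult AQ_mult by auto
    show "snd ` carrier AU = carrier AutQ"
    proof
      show "snd ` carrier AU \<subseteq> carrier AutQ" using AU_carrier CC_snd by auto
      show "carrier AutQ \<subseteq> snd ` carrier AU"
      proof
        fix h assume "h \<in> carrier AutQ"
        hence "sec h \<in> carrier AU" "snd (sec h) = h" using sec_AU by auto
        thus "h \<in> snd ` carrier AU" by (metis image_eqI)
      qed
    qed
    show "continuous_map TU AutQ_top snd" by (rule snd_cont)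
    have "open_map TU AutQ_top (snd \<circ> Psi')"
      by (rule open_map_compose[OF homeomorphic_imp_open_map[OF HM'] open_map_snd])
    moreover have "snd \<circ> Psi' = snd" by (simp add: fun_eq_iff)
    ultimately show "open_map TU AutQ_top snd" by simp
    show "(\<lambda>p. p) ` carrier (IsoU X d lt) = kernel AU AutQ snd"
      unfolding kernel_def carrier_IsoU AU_carrier AQ_one by simp
  qed
  show "\<exists>s. s \<in> hom AutQ AU \<and> continuous_map AutQ_top TU s \<and> (\<forall>h\<in>carrier AutQ. snd (s h) = h) \<and>
      (\<lambda>(n, h). n \<otimes>\<^bsub>AU\<^esub> s h) \<in> iso (semidirect (IsoU X d lt) AutQ AU s) AU \<and>
      homeomorphic_map (prod_topology (IsoU_top X d lt) AutQ_top) TU (\<lambda>(n, h). n \<otimes>\<^bsub>AU\<^esub> s h)"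
  proof (intro exI[of _ sec] conjI)
    show "sec \<in> hom AutQ AU"
      unfolding hom_def using sec_AU sec_hom AQ_mult by auto
    show "continuous_map AutQ_top TU sec" by (rule sec_cont)
    show "\<forall>h\<in>carrier AutQ. snd (sec h) = h" by simp
    show "homeomorphic_map (prod_topology (IsoU_top X d lt) AutQ_top) TU Psi" by (rule HM)
    have carS: "carrier (semidirect (IsoU X d lt) AutQ AU sec) = KK \<times> carrier AutQ"
      by (simp add: semidirect_def carrier_IsoU)
    have tp: "topspace (prod_topology (IsoU_top X d lt) AutQ_top) = KK \<times> carrier AutQ"
      by (simp add: topspace_IsoU_top topspace_AQT)
    have PM1: "\<forall>x\<in>topspace (prod_topology (IsoU_top X d lt) AutQ_top). Psi' (Psi x) = x"
      using PM unfolding homeomorphic_maps_def by blast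
    have PM2: "\<forall>y\<in>topspace TU. Psi (Psi' y) = y"
      using PM unfolding homeomorphic_maps_def by blast
    have PMa: "\<forall>x\<in>KK \<times> carrier AutQ. Psi' (Psi x) = x" using PM1 unfolding tp .
    have PMb: "\<forall>y\<in>CC. Psi (Psi' y) = y" using PM2 unfolding topspace_TU .
    note PMs = PMa PMb
    have Pin: "Psi ` (KK \<times> carrier AutQ) \<subseteq> CC"
    proof
      fix y assume "y \<in> Psi ` (KK \<times> carrier AutQ)"
      then obtain n h where "y = n \<otimes>\<^bsub>AU\<^esub> sec h" "n \<in> KK" "h \<in> carrier AutQ" by auto
      thus "y \<in> CC" using G.m_closed sec_AU AU_carrier by auto
    qed
    have P'in: "Psi' ` CC \<subseteq> KK \<times> carrier AutQ" using Psi'_K CC_snd by auto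
    have bij: "bij_betw Psi (KK \<times> carrier AutQ) CC"
      by (rule bij_betw_byWitness[OF PMs Pin P'in])
    have hom: "Psi \<in> hom (semidirect (IsoU X d lt) AutQ AU sec) AU"
      unfolding hom_def
    proof (intro CollectI conjI ballI)
      show "Psi \<in> carrier (semidirect (IsoU X d lt) AutQ AU sec) \<rightarrow> carrier AU"
        using Pin carS AU_carrier by auto
      fix a b assume a: "a \<in> carrier (semidirect (IsoU X d lt) AutQ AU sec)"
        and b: "b \<in> carrier (semidirect (IsoU X d lt) AutQ AU sec)"
      obtain n h where ab: "a = (n, h)" and n: "n \<in> carrier AU" and h: "h \<in> carrier AutQ"
        using a carS AU_carrier by auto
      obtain n' h' where bb: "b = (n', h')" and n': "n' \<in> carrier AU" and h': "h' \<in> carrier AutQ"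
        using b carS AU_carrier by auto
      have sh: "sec h \<in> carrier AU" "sec h' \<in> carrier AU" using sec_AU h h' by auto
      have shh: "sec (h \<otimes>\<^bsub>AutQ\<^esub> h') = sec h \<otimes>\<^bsub>AU\<^esub> sec h'" using sec_hom[OF h h'] AQ_mult by simp
      show "Psi (a \<otimes>\<^bsub>semidirect (IsoU X d lt) AutQ AU sec\<^esub> b) = Psi a \<otimes>\<^bsub>AU\<^esub> Psi b"
      proof -
        have c: "inv\<^bsub>AU\<^esub> sec h \<otimes>\<^bsub>AU\<^esub> (sec h \<otimes>\<^bsub>AU\<^esub> sec h') = sec h'"
          using sh by (simp add: G.m_assoc[symmetric] G.l_inv)
        show ?thesis unfolding ab bb using n n' sh shh c by (simp add: semidirect_def G.m_assoc)
      qed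
    qed
    show "Psi \<in> iso (semidirect (IsoU X d lt) AutQ AU sec) AU"
      unfolding iso_def using hom bij carS AU_carrier by simp
  qed
qed

end

theorem theorem4p5:
  fixes X :: "'a set" and d :: "'a \<Rightarrow> 'a \<Rightarrow> rat" and lt :: "'a \<Rightarrow> 'a \<Rightarrow> bool"
  assumes "fraisse_limit_U X d lt"
  shows "short_exact_top (IsoU X d lt) (IsoU_top X d lt) (AutU X d lt) (AutU_top X d lt)
           AutQ AutQ_top (\<lambda>p. p) snd
       \<and> (\<exists>s. s \<in> hom AutQ (AutU X d lt) \<and> continuous_map AutQ_top (AutU_top X d lt) s \<and>
              (\<forall>h\<in>carrier AutQ. snd (s h) = h) \<and>
              (\<lambda>(n, h). n \<otimes>\<^bsub>AutU X d lt\<^esub> s h)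
                 \<in> iso (semidirect (IsoU X d lt) AutQ (AutU X d lt) s) (AutU X d lt) \<and>
              homeomorphic_map (prod_topology (IsoU_top X d lt) AutQ_top) (AutU_top X d lt)
                 (\<lambda>(n, h). n \<otimes>\<^bsub>AutU X d lt\<^esub> s h))"
  by (rule FL.main_thm) (rule FL.intro[OF assms])


end
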